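(* Let $\varphi(z_1,\dots,z_h)$ be a homogeneous cubic polynomial with real coefficients, and for $z\in\mathbb{C}^h$ let $\omega(z)=-\varphi(z)e_0+\sum_{i=1}^h\frac{\partial\varphi}{\partial z_i}e_i+\sum_{i=1}^hz_if_i+f_0$ in $\mathbb{C}^{2h+2}$ with real symplectic basis $e_0,\dots,e_h,f_1,\dots,f_h,f_0$. Define the filtration $F^3=\mathbb{C}\omega(z)$, $F^2=\operatorname{span}\{\omega,\partial\omega/\partial z_1,\dots,\partial\omega/\partial z_h\}$, $F^1=(F^3)^\perp$, $F^0=\mathbb{C}^{2h+2}$. Write $y=(\operatorname{Im}z_1,\dots,\operatorname{Im}z_h)\in\mathbb{R}^h$. Then the set of $z\in\mathbb{C}^h$ at which the Hodge–Riemann bilinear relations hold, namely $\sqrt{-1}\langle\omega,\bar\omega\rangle>0$ and the Hermitian form $\psi\mapsto\sqrt{-1}\langle\psi,\bar\psi\rangle$ is negative definite on $V^{2,1}=\{\psi\in F^2:\langle\psi,\bar\omega\rangle=0\}$, equals the set of $z$ such that $\varphi(y)<0$ and the real symmetric matrix $\bigl(\frac{\partial^2\varphi}{\partial z_i\partial z_j}(y)\bigr)$ has signature $(h-1,1)$ (i.e. $h-1$ positive and one negative eigenvalue).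
   Context: Symplectic basis: $\langle e_i,e_j\rangle=\langle f_i,f_j\rangle=0$, $\langle e_i,f_j\rangle=\delta_{ij}$; complex conjugation is with respect to the real structure in which all $e_i,f_i$ are real. *)

theory Defs
  imports "HOL-Analysis.Analysis" "HOL-Library.Complex_Order"
    "Jordan_Normal_Form.Matrix" "Jordan_Normal_Form.Char_Poly"
begin

(* Homogeneous cubic polynomial in z_1..z_h with real coefficients c i j k
   (every real homogeneous cubic is of this form), evaluated over any
   real normed field (here: real or complex). *)
definition cubic_form :: "nat \<Rightarrow> (nat \<Rightarrow> nat \<Rightarrow> nat \<Rightarrow> real) \<Rightarrow> (nat \<Rightarrow> 'a::real_normed_field) \<Rightarrow> 'a" where
  "cubic_form h c z = (\<Sum>i=1..h. \<Sum>j=1..h. \<Sum>k=1..h. of_real (c i j k) * z i * z j * z k)"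

definition pd :: "nat \<Rightarrow> ((nat \<Rightarrow> 'a::real_normed_field) \<Rightarrow> 'a) \<Rightarrow> (nat \<Rightarrow> 'a) \<Rightarrow> 'a" where
  "pd i F z = deriv (\<lambda>t. F (z(i := z i + t))) 0"

(* C^{2h+2}: coordinate k (0 \<le> k \<le> h) is the e_k coordinate,
   coordinate h+1+k (0 \<le> k \<le> h) is the f_k coordinate. *)
definition sympl :: "nat \<Rightarrow> complex vec \<Rightarrow> complex vec \<Rightarrow> complex" where
  "sympl h v w = (\<Sum>k=0..h. v $ k * w $ (h+1+k) - v $ (h+1+k) * w $ k)"

definition cconj :: "complex vec \<Rightarrow> complex vec" where
  "cconj v = map_vec cnj v"

definition omega :: "nat \<Rightarrow> (nat \<Rightarrow> nat \<Rightarrow> nat \<Rightarrow> real) \<Rightarrow> (nat \<Rightarrow> complex) \<Rightarrow> complex vec" where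
  "omega h c z = vec (2*h+2) (\<lambda>k.
      if k = 0 then - cubic_form h c z
      else if k \<le> h then pd k (cubic_form h c) z
      else if k = h+1 then 1
      else z (k - (h+1)))"

definition domega :: "nat \<Rightarrow> (nat \<Rightarrow> nat \<Rightarrow> nat \<Rightarrow> real) \<Rightarrow> nat \<Rightarrow> (nat \<Rightarrow> complex) \<Rightarrow> complex vec" where
  "domega h c i z = vec (2*h+2) (\<lambda>k. pd i (\<lambda>w. omega h c w $ k) z)"

definition F2 :: "nat \<Rightarrow> (nat \<Rightarrow> nat \<Rightarrow> nat \<Rightarrow> real) \<Rightarrow> (nat \<Rightarrow> complex) \<Rightarrow> complex vec set" where
  "F2 h c z = {vec (2*h+2) (\<lambda>k. a 0 * omega h c z $ k + (\<Sum>i=1..h. a i * domega h c i z $ k)) | a. True}"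

definition V21 :: "nat \<Rightarrow> (nat \<Rightarrow> nat \<Rightarrow> nat \<Rightarrow> real) \<Rightarrow> (nat \<Rightarrow> complex) \<Rightarrow> complex vec set" where
  "V21 h c z = {\<psi> \<in> F2 h c z. sympl h \<psi> (cconj (omega h c z)) = 0}"

definition HR_holds :: "nat \<Rightarrow> (nat \<Rightarrow> nat \<Rightarrow> nat \<Rightarrow> real) \<Rightarrow> (nat \<Rightarrow> complex) \<Rightarrow> bool" where
  "HR_holds h c z \<longleftrightarrow>
     0 < \<i> * sympl h (omega h c z) (cconj (omega h c z)) \<and>
     (\<forall>\<psi>\<in>V21 h c z. \<psi> \<noteq> 0\<^sub>v (2*h+2) \<longrightarrow> \<i> * sympl h \<psi> (cconj \<psi>) < 0)"

(* Hessian matrix (d^2 phi / dz_i dz_j (y))_{i,j=1..h}, 0-based matrix indices *)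
definition hessian :: "nat \<Rightarrow> (nat \<Rightarrow> nat \<Rightarrow> nat \<Rightarrow> real) \<Rightarrow> (nat \<Rightarrow> real) \<Rightarrow> real mat" where
  "hessian h c y = mat h h (\<lambda>(i,j). pd (i+1) (pd (j+1) (cubic_form h c)) y)"

definition num_pos_eig :: "real mat \<Rightarrow> nat" where
  "num_pos_eig A = (\<Sum>t\<in>{t. poly (char_poly A) t = 0 \<and> t > 0}. order t (char_poly A))"

definition num_neg_eig :: "real mat \<Rightarrow> nat" where
  "num_neg_eig A = (\<Sum>t\<in>{t. poly (char_poly A) t = 0 \<and> t < 0}. order t (char_poly A))"

definition has_signature :: "real mat \<Rightarrow> nat \<Rightarrow> nat \<Rightarrow> bool" where
  "has_signature A p q \<longleftrightarrow> num_pos_eig A = p \<and> num_neg_eig A = q"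

end

theory Submission
  imports Defs
begin

unbundle no vec_syntax


lemma hh_sum:
  fixes a :: "nat \<Rightarrow> real"
  assumes "i < n" "j < n"
  shows "(\<Sum>k<n. ((if i = k then 1 else 0) - c * a i * a k) * ((if k = j then 1 else 0) - c * a k * a j))
    = (if i = j then 1 else 0) - 2 * c * a i * a j + c^2 * a i * a j * (\<Sum>k<n. a k * a k)"
proof -
  have e: "\<And>k. ((if i = k then 1 else 0) - c * a i * a k) * ((if k = j then 1 else 0) - c * a k * a j)
     = (if i = k then (if k = j then 1 else 0) else 0) - (if i = k then c * a k * a j else 0)
       - (if k = j then c * a i * a k else 0) + c^2 * a i * a j * (a k * a k)"
    by (auto simp: algebra_simps power2_eq_square)
  show ?thesis unfolding e using assms
    by (simp add: sum.distrib sum_subtractf sum_distrib_left[symmetric] sum.delta sum.delta')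
qed

lemma householder:
  fixes u :: "real vec"
  assumes u: "u \<in> carrier_vec n" and uu: "u \<bullet> u = 1" and n: "n > 0"
  shows "\<exists>W. W \<in> carrier_mat n n \<and> transpose_mat W = W \<and> W * W = 1\<^sub>m n \<and> W *\<^sub>v unit_vec n 0 = u"
proof (cases "u = unit_vec n 0")
  case True
  thus ?thesis using u by (intro exI[of _ "1\<^sub>m n"]) auto
next
  case False
  define w where "w = u - unit_vec n 0"
  have w: "w \<in> carrier_vec n" using u by (simp add: w_def)
  have wi: "\<And>i. i < n \<Longrightarrow> w $ i = u $ i - (if i = 0 then 1 else 0)"
    using u by (simp add: w_def unit_vec_def)
  define s where "s = (\<Sum>k<n. w $ k * w $ k)"
  have us: "(\<Sum>k<n. u $ k * u $ k) = 1" using uu u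
    by (simp add: scalar_prod_def atLeast0LessThan)
  have "s = (\<Sum>k<n. u $ k * u $ k - 2 * (if k = 0 then u $ k else 0) + (if k = 0 then 1 else 0))"
    unfolding s_def by (intro sum.cong refl, auto simp: wi algebra_simps)
  also have "\<dots> = 2 - 2 * u $ 0" using n
    by (simp add: sum.distrib sum_subtractf us sum_distrib_left[symmetric])
  finally have s: "s = 2 - 2 * u $ 0" .
  have "s \<noteq> 0"
  proof
    assume "s = 0"
    hence "\<forall>k\<in>{..<n}. w $ k * w $ k = 0" unfolding s_def
      by (subst (asm) sum_nonneg_eq_0_iff) auto
    hence "\<And>k. k < n \<Longrightarrow> w $ k = 0" by simp
    hence "u = unit_vec n 0" using u wi by (intro eq_vecI) (force simp: unit_vec_def)+
    thus False using False by simp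
  qed
  define c where "c = 2 / s"
  define W where "W = mat n n (\<lambda>(i,j). (if i = j then 1 else 0) - c * w $ i * w $ j)"
  have W: "W \<in> carrier_mat n n" unfolding W_def by simp
  have "transpose_mat W = W" unfolding W_def by (rule eq_matI) auto
  moreover have "W * W = 1\<^sub>m n"
  proof (rule eq_matI)
    fix i j assume ij: "i < dim_row (1\<^sub>m n)" "j < dim_col (1\<^sub>m n)"
    hence "(W * W) $$ (i,j) = (\<Sum>k<n. ((if i = k then 1 else 0) - c * w $ i * w $ k) *
          ((if k = j then 1 else 0) - c * w $ k * w $ j))"
      unfolding W_def by (auto simp: scalar_prod_def atLeast0LessThan intro!: sum.cong)
    also have "\<dots> = (if i = j then 1 else 0) - 2 * c * w $ i * w $ j + c^2 * w $ i * w $ j * s"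
      unfolding s_def by (rule hh_sum, use ij in auto)
    also have "\<dots> = (if i = j then 1 else 0)" using \<open>s \<noteq> 0\<close>
      unfolding c_def by (simp add: power2_eq_square field_simps)
    finally show "(W * W) $$ (i,j) = 1\<^sub>m n $$ (i,j)" using ij by auto
  qed (use W in auto)
  moreover have "W *\<^sub>v unit_vec n 0 = u"
  proof (rule eq_vecI)
    fix i assume i: "i < dim_vec u"
    hence "(W *\<^sub>v unit_vec n 0) $ i = (\<Sum>ia<n. W $$ (i, ia) * (if ia = 0 then 1 else 0))" using W n u
      by (simp add: scalar_prod_def atLeast0LessThan unit_vec_def row_def)
    also have "\<dots> = (\<Sum>ia<n. if ia = 0 then W $$ (i, ia) else 0)"
      by (intro sum.cong) auto
    also have "\<dots> = W $$ (i,0)" using n by simp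
    also have "\<dots> = (if i = 0 then 1 else 0) - c * w $ i * w $ 0" unfolding W_def using i u n by auto
    also have "\<dots> = u $ i"
    proof -
      have "c * w $ 0 = -1" unfolding c_def s using wi[OF n] \<open>s \<noteq> 0\<close> s
        by (simp add: field_simps)
      hence "c * w $ i * w $ 0 = - w $ i"
        by (metis mult.commute mult.left_commute mult_minus1_right)
      thus ?thesis using wi[of i] i u by auto
    qed
    finally show "(W *\<^sub>v unit_vec n 0) $ i = u $ i" .
  qed (use W u in auto)
  ultimately show ?thesis using W by blast
qed

lemma real_sym_eigen:
  fixes A :: "real mat"
  assumes A: "A \<in> carrier_mat n n" and sym: "transpose_mat A = A" and n: "n > 0"
  shows "\<exists>lam v. v \<in> carrier_vec n \<and> v \<noteq> 0\<^sub>v n \<and> A *\<^sub>v v = lam \<cdot>\<^sub>v v"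
proof -
  define Ac where "Ac = map_mat complex_of_real A"
  have Ac: "Ac \<in> carrier_mat n n" using A by (simp add: Ac_def)
  from char_poly_factorized[OF Ac] obtain as where
    cp: "char_poly Ac = (\<Prod>a\<leftarrow>as. [:- a, 1:])" and len: "length as = n" by auto
  from len n obtain a where a: "a \<in> set as" by (cases as) auto
  have "poly (char_poly Ac) a = 0" unfolding cp using a
    by (simp add: poly_prod_list prod_list_zero_iff)
  hence "eigenvalue Ac a" using eigenvalue_root_char_poly[OF Ac] by simp
  then obtain w where w: "w \<in> carrier_vec n" "w \<noteq> 0\<^sub>v n" "Ac *\<^sub>v w = a \<cdot>\<^sub>v w"
    unfolding eigenvalue_def eigenvector_def using Ac by auto
  define s where "s = (\<Sum>i<n. cnj (w $ i) * (\<Sum>j<n. of_real (A $$ (i,j)) * w $ j))"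
  define q where "q = (\<Sum>i<n. cnj (w $ i) * w $ i)"
  have "s = (\<Sum>i<n. cnj (w $ i) * (Ac *\<^sub>v w) $ i)"
    unfolding s_def using w(1) Ac A
    by (intro sum.cong refl, auto simp: Ac_def scalar_prod_def
        atLeast0LessThan)
  also have "\<dots> = (\<Sum>i<n. cnj (w $ i) * (a * w $ i))"
    by (intro sum.cong refl, subst w(3), use w in auto)
  also have "\<dots> = a * q" unfolding q_def
    by (simp add: sum_distrib_left mult.commute mult.left_commute)
  finally have sq: "s = a * q" .
  have Asym: "\<And>i j. i < n \<Longrightarrow> j < n \<Longrightarrow> A $$ (j,i) = A $$ (i,j)"
    using sym A by (metis carrier_matD index_transpose_mat(1))
  have "cnj s = (\<Sum>i<n. \<Sum>j<n. w $ i * of_real (A $$ (i,j)) * cnj (w $ j))"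
    unfolding s_def by (simp add: sum_distrib_left mult.assoc)
  also have "\<dots> = (\<Sum>j<n. \<Sum>i<n. w $ i * of_real (A $$ (i,j)) * cnj (w $ j))"
    by (rule sum.swap)
  also have "\<dots> = s" unfolding s_def sum_distrib_left
    by (intro sum.cong refl, simp add: Asym mult.commute mult.left_commute)
  finally have cs: "cnj s = s" .
  have qpos: "q = of_real (\<Sum>i<n. (cmod (w $ i))^2)"
    unfolding q_def by (simp add: complex_norm_square mult.commute del: of_real_power)
  have "\<exists>i<n. w $ i \<noteq> 0"
  proof (rule ccontr)
    assume "\<not> ?thesis"
    hence "w = 0\<^sub>v n" using w by (intro eq_vecI) auto
    thus False using w by auto
  qed
  then obtain i where i: "i < n" "w $ i \<noteq> 0" by auto
  have "(\<Sum>i<n. (cmod (w $ i))^2) > 0"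
    by (rule sum_pos2[of _ i], use i in auto)
  hence q0: "q \<noteq> 0" and cq: "cnj q = q" unfolding qpos
    by (auto simp del: of_real_power of_real_sum)
  have ca: "cnj a = a"
  proof -
    have "cnj a * q = a * q" using cs sq cq by (metis complex_cnj_mult)
    thus ?thesis using q0 by simp
  qed
  hence aR: "a = of_real (Re a)" by (metis Reals_cnj_iff complex_is_Real_iff of_real_Re)
  have "char_poly Ac = map_poly of_real (char_poly A)"
    unfolding Ac_def by (rule of_real_hom.char_poly_hom[OF A])
  hence "of_real (poly (char_poly A) (Re a)) = (0::complex)"
    using \<open>poly (char_poly Ac) a = 0\<close> aR by (metis of_real_hom.poly_map_poly)
  hence "poly (char_poly A) (Re a) = 0" by simp
  hence "eigenvalue A (Re a)" using eigenvalue_root_char_poly[OF A] by simp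
  thus ?thesis unfolding eigenvalue_def eigenvector_def using A by auto
qed


lemma block_one_mult:
  fixes U3 :: "real mat"
  assumes U3: "U3 \<in> carrier_mat m m" and V3: "V3 \<in> carrier_mat m m"
  shows "four_block_mat (1\<^sub>m 1) (0\<^sub>m 1 m) (0\<^sub>m m 1) U3 *
     four_block_mat (1\<^sub>m 1) (0\<^sub>m 1 m) (0\<^sub>m m 1) V3
   = four_block_mat (1\<^sub>m 1) (0\<^sub>m 1 m) (0\<^sub>m m 1) (U3 * V3)"
proof -
  have c: "1\<^sub>m 1 \<in> carrier_mat 1 1" "0\<^sub>m 1 m \<in> carrier_mat 1 m" "0\<^sub>m m 1 \<in> carrier_mat m 1" 
    by auto
  show ?thesis 
    unfolding mult_four_block_mat[OF c U3 c V3] using U3 V3 by simp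
qed

lemma block_diag_mult:
  fixes U3 A3 :: "real mat"
  assumes U3: "U3 \<in> carrier_mat m m" and A3: "A3 \<in> carrier_mat m m"
  shows "four_block_mat (1\<^sub>m 1) (0\<^sub>m 1 m) (0\<^sub>m m 1) (transpose_mat U3) *
     four_block_mat (mat 1 1 (\<lambda>_. l)) (0\<^sub>m 1 m) (0\<^sub>m m 1) A3 *
     four_block_mat (1\<^sub>m 1) (0\<^sub>m 1 m) (0\<^sub>m m 1) U3
   = four_block_mat (mat 1 1 (\<lambda>_. l)) (0\<^sub>m 1 m) (0\<^sub>m m 1) (transpose_mat U3 * A3 * U3)"
proof -
  have c: "1\<^sub>m 1 \<in> carrier_mat 1 1" "0\<^sub>m 1 m \<in> carrier_mat 1 m" "0\<^sub>m m 1 \<in> carrier_mat m 1" 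
    and L: "mat 1 1 (\<lambda>_. l) \<in> carrier_mat 1 1" and U3T: "transpose_mat U3 \<in> carrier_mat m m"
    using U3 by auto
  have "four_block_mat (1\<^sub>m 1) (0\<^sub>m 1 m) (0\<^sub>m m 1) (transpose_mat U3) *
     four_block_mat (mat 1 1 (\<lambda>_. l)) (0\<^sub>m 1 m) (0\<^sub>m m 1) A3 = 
     four_block_mat (mat 1 1 (\<lambda>_. l)) (0\<^sub>m 1 m) (0\<^sub>m m 1) (transpose_mat U3 * A3)"
    unfolding mult_four_block_mat[OF c U3T L c(2,3) A3] using U3 A3 L by simp
  also have "\<dots> * four_block_mat (1\<^sub>m 1) (0\<^sub>m 1 m) (0\<^sub>m m 1) U3 = 
     four_block_mat (mat 1 1 (\<lambda>_. l)) (0\<^sub>m 1 m) (0\<^sub>m m 1) (transpose_mat U3 * A3 * U3)"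
    apply (subst mult_four_block_mat[OF L c(2,3) _ c U3])
    using U3 A3 L by auto
  finally show ?thesis .
qed
lemma mult4_assoc:
  fixes A B C D :: "'a::comm_ring_1 mat"
  assumes "A \<in> carrier_mat n n" "B \<in> carrier_mat n n" "C \<in> carrier_mat n n" "D \<in> carrier_mat n n"
  shows "(A * B) * (C * D) = A * (B * C) * D"
  using assms by (simp add: assoc_mult_mat[of _ n n _ n _ n])

lemma mult5_assoc:
  fixes A B C D E :: "'a::comm_ring_1 mat"
  assumes "A \<in> carrier_mat n n" "B \<in> carrier_mat n n" "C \<in> carrier_mat n n" "D \<in> carrier_mat n n"
    "E \<in> carrier_mat n n"
  shows "(A * B) * C * (D * E) = A * (B * C * D) * E"
  using assms by (simp add: assoc_mult_mat[of _ n n _ n _ n])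

lemma spectral:
  fixes A :: "real mat"
  assumes "A \<in> carrier_mat n n" "transpose_mat A = A"
  shows "\<exists>U d. U \<in> carrier_mat n n \<and> transpose_mat U * U = 1\<^sub>m n \<and> U * transpose_mat U = 1\<^sub>m n \<and>
     transpose_mat U * A * U = mat n n (\<lambda>(i,j). if i = j then d i else 0)"
  using assms
proof (induction n arbitrary: A)
  case 0
  thus ?case by (intro exI[of _ "1\<^sub>m 0"] exI[of _ "\<lambda>_. 0"]) (auto intro!: eq_matI)
next
  case (Suc m)
  let ?n = "Suc m"
  have A: "A \<in> carrier_mat ?n ?n" and sym: "transpose_mat A = A" by fact+
  from real_sym_eigen[OF A sym] obtain l v where
    v: "v \<in> carrier_vec ?n" "v \<noteq> 0\<^sub>v ?n" "A *\<^sub>v v = l \<cdot>\<^sub>v v" by auto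
  have vv: "v \<bullet> v > 0"
  proof -
    have "\<exists>i<?n. v $ i \<noteq> 0"
    proof (rule ccontr)
      assume "\<not> ?thesis"
      hence "v = 0\<^sub>v ?n" using v by (intro eq_vecI) auto
      thus False using v by auto
    qed
    then obtain i where i: "i < ?n" "v $ i \<noteq> 0" by auto
    have "(\<Sum>k\<in>{0..<?n}. v $ k * v $ k) > 0"
      by (rule sum_pos2[of _ i], use i in \<open>auto simp: zero_less_mult_iff linorder_neq_iff\<close>)
    thus ?thesis using v by (simp add: scalar_prod_def)
  qed
  define u where "u = (1 / sqrt (v \<bullet> v)) \<cdot>\<^sub>v v"
  have u: "u \<in> carrier_vec ?n" using v by (simp add: u_def)
  have uu: "u \<bullet> u = 1" unfolding u_def using v vv
    by (simp add: smult_scalar_prod_distrib scalar_prod_smult_distrib)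
  have Au: "A *\<^sub>v u = l \<cdot>\<^sub>v u" unfolding u_def using v A
    by (simp add: mult_mat_vec smult_smult_assoc mult.commute)
  from householder[OF u uu] obtain W where
    W: "W \<in> carrier_mat ?n ?n" "transpose_mat W = W" "W * W = 1\<^sub>m ?n" "W *\<^sub>v unit_vec ?n 0 = u"
    by auto
  have Wu: "W *\<^sub>v u = unit_vec ?n 0"
  proof -
    have "W *\<^sub>v u = W *\<^sub>v (W *\<^sub>v unit_vec ?n 0)" using W(4) by simp
    also have "\<dots> = (W * W) *\<^sub>v unit_vec ?n 0"
      by (rule assoc_mult_mat_vec[symmetric, of _ ?n ?n _ ?n], use W in auto)
    finally show ?thesis using W(3) by simp
  qed
  define A' where "A' = W * A * W"
  have A': "A' \<in> carrier_mat ?n ?n" using W A by (simp add: A'_def)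
  have symA': "transpose_mat A' = A'" unfolding A'_def using W A sym
    by (simp add: transpose_mult[of _ ?n ?n _ ?n] assoc_mult_mat[of _ ?n ?n _ ?n _ ?n])
  have A'e: "A' *\<^sub>v unit_vec ?n 0 = l \<cdot>\<^sub>v unit_vec ?n 0"
  proof -
    have "A' *\<^sub>v unit_vec ?n 0 = W *\<^sub>v (A *\<^sub>v (W *\<^sub>v unit_vec ?n 0))"
      unfolding A'_def using W A by (simp add: assoc_mult_mat_vec[of _ ?n ?n _ ?n])
    also have "\<dots> = l \<cdot>\<^sub>v unit_vec ?n 0" unfolding W(4) Au using W u
      by (simp add: mult_mat_vec Wu)
    finally show ?thesis .
  qed
  have col0: "\<And>i. i < ?n \<Longrightarrow> A' $$ (i,0) = (if i = 0 then l else 0)"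
  proof -
    fix i assume i: "i < ?n"
    have "(A' *\<^sub>v unit_vec ?n 0) $ i = A' $$ (i,0)" using A' i
      by (simp add: scalar_prod_def row_def unit_vec_def if_distrib cong: if_cong)
    thus "A' $$ (i,0) = (if i = 0 then l else 0)" unfolding A'e using i by (cases "i = 0") auto
  qed
  have row0: "\<And>j. j < ?n \<Longrightarrow> A' $$ (0,j) = (if j = 0 then l else 0)"
    using col0 symA' A' by (metis carrier_matD index_transpose_mat(1) zero_less_Suc)
  define A3 where "A3 = mat m m (\<lambda>(i,j). A' $$ (Suc i, Suc j))"
  have A3: "A3 \<in> carrier_mat m m" by (simp add: A3_def)
  have symA3: "transpose_mat A3 = A3" unfolding A3_def
    using symA' A' by (intro eq_matI) (auto, metis carrier_matD index_transpose_mat(1) Suc_less_eq)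
  have A'block: "A' = four_block_mat (mat 1 1 (\<lambda>_. l)) (0\<^sub>m 1 m) (0\<^sub>m m 1) A3"
    by (rule eq_matI, insert A' col0 row0, auto simp: A3_def)
  from Suc.IH[OF A3 symA3] obtain U3 d3 where
    U3: "U3 \<in> carrier_mat m m" "transpose_mat U3 * U3 = 1\<^sub>m m" "U3 * transpose_mat U3 = 1\<^sub>m m"
    "transpose_mat U3 * A3 * U3 = mat m m (\<lambda>(i,j). if i = j then d3 i else 0)" by auto
  define V where "V = four_block_mat (1\<^sub>m 1) (0\<^sub>m 1 m) (0\<^sub>m m 1) U3"
  have V: "V \<in> carrier_mat ?n ?n" unfolding V_def using U3 by auto
  have VT: "transpose_mat V = four_block_mat (1\<^sub>m 1) (0\<^sub>m 1 m) (0\<^sub>m m 1) (transpose_mat U3)"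
    unfolding V_def using U3 by (subst transpose_four_block_mat) auto
  have VTV: "transpose_mat V * V = 1\<^sub>m ?n" unfolding VT unfolding V_def
    by (subst block_one_mult, use U3 in auto)
  have VVT: "V * transpose_mat V = 1\<^sub>m ?n" unfolding VT unfolding V_def
    by (subst block_one_mult, use U3 in auto)
  have VAV: "transpose_mat V * A' * V = mat ?n ?n (\<lambda>(i,j). if i = j then (if i = 0 then l else d3 (i - 1)) else 0)"
    unfolding VT unfolding V_def A'block block_diag_mult[OF U3(1) A3] U3(4)
    by (rule eq_matI) auto
  define U where "U = W * V"
  have U: "U \<in> carrier_mat ?n ?n" unfolding U_def using W V by auto
  have UT: "transpose_mat U = transpose_mat V * W" unfolding U_def using W V
    by (simp add: transpose_mult[of _ ?n ?n _ ?n])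
  show ?case
  proof (intro exI conjI)
    show "U \<in> carrier_mat ?n ?n" by fact
    have "transpose_mat U * U = transpose_mat V * (W * W) * V" unfolding UT unfolding U_def using W V
      by (intro mult4_assoc) auto
    thus "transpose_mat U * U = 1\<^sub>m ?n" using W V VTV by simp
    have "U * transpose_mat U = W * (V * transpose_mat V) * W" unfolding UT unfolding U_def using W V
      by (intro mult4_assoc) auto
    thus "U * transpose_mat U = 1\<^sub>m ?n" using W V VVT by simp
    have "transpose_mat U * A * U = transpose_mat V * A' * V" unfolding UT unfolding U_def A'_def using W V A
      by (intro mult5_assoc) auto
    thus "transpose_mat U * A * U = mat ?n ?n (\<lambda>(i,j). if i = j then (if i = 0 then l else d3 (i - 1)) else 0)"
      using VAV by simp
  qed
qed


lemma order_linfac: "order t (\<Prod>a\<leftarrow>xs. [:- a, 1:]) = count_list xs (t::real)"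
proof (induction xs)
  case Nil thus ?case by (simp add: order_0I)
next
  case (Cons x xs)
  have nz: "(\<Prod>a\<leftarrow>xs. [:- a, 1:]) \<noteq> (0::real poly)"
    by (auto simp: prod_list_zero_iff)
  have "order t (\<Prod>a\<leftarrow>x#xs. [:- a, 1:]) = order t [:- x, 1:] + order t (\<Prod>a\<leftarrow>xs. [:- a, 1:])"
  proof -
    have "order t (\<Prod>a\<leftarrow>x#xs. [:- a, 1:]) = order t ([:- x, 1:] * (\<Prod>a\<leftarrow>xs. [:- a, 1:]))"
      by (simp only: list.map prod_list.Cons)
    also have "\<dots> = order t [:- x, 1:] + order t (\<Prod>a\<leftarrow>xs. [:- a, 1:])"
      by (rule order_mult, metis nz mult_eq_0_iff pCons_eq_0_iff one_neq_zero)
    finally show ?thesis .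
  qed
  thus ?case using Cons by (simp add: order_linear')
qed

lemma poly_linfac_zero: "poly (\<Prod>a\<leftarrow>xs. [:- a, 1:]) (t::real) = 0 \<longleftrightarrow> t \<in> set xs"
  by (induction xs) auto

lemma sum_count_list: "finite S \<Longrightarrow> (\<Sum>t\<in>S. count_list xs t) = length (filter (\<lambda>a. a \<in> S) xs)"
proof (induction xs)
  case Nil thus ?case by simp
next
  case (Cons x xs)
  have "(\<Sum>t\<in>S. count_list (x#xs) t) = (\<Sum>t\<in>S. count_list xs t + (if x = t then 1 else 0))"
    by (intro sum.cong) auto
  also have "\<dots> = (\<Sum>t\<in>S. count_list xs t) + (if x \<in> S then 1 else 0)"
    using Cons.prems by (simp add: sum.distrib)
  finally show ?case using Cons by simp
qed

lemma count_roots: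
  fixes P :: "real \<Rightarrow> bool"
  shows "(\<Sum>t\<in>{t. poly (\<Prod>a\<leftarrow>map d [0..<n]. [:- a, 1:]) t = 0 \<and> P t}. order t (\<Prod>a\<leftarrow>map d [0..<n]. [:- a, 1:]))
     = card {i. i < n \<and> P (d i)}"
proof -
  let ?xs = "map d [0..<n]"
  have S: "{t. poly (\<Prod>a\<leftarrow>?xs. [:- a, 1:]) t = 0 \<and> P t} = {t \<in> set ?xs. P t}"
    using poly_linfac_zero[of ?xs] by blast
  have "(\<Sum>t\<in>{t \<in> set ?xs. P t}. count_list ?xs t) = length (filter (\<lambda>a. a \<in> {t \<in> set ?xs. P t}) ?xs)"
    by (rule sum_count_list) auto
  also have "\<dots> = length (filter P ?xs)" by (intro arg_cong[where f=length] filter_cong) auto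
  also have "\<dots> = card {i. i < n \<and> P (d i)}" unfolding length_filter_conv_card
    by (intro arg_cong[where f=card]) auto
  finally show ?thesis unfolding S order_linfac .
qed

lemma eig_counts:
  fixes H U :: "real mat"
  assumes H: "H \<in> carrier_mat n n" and U: "U \<in> carrier_mat n n"
    and UU: "transpose_mat U * U = 1\<^sub>m n" "U * transpose_mat U = 1\<^sub>m n"
    and D: "transpose_mat U * H * U = mat n n (\<lambda>(i,j). if i = j then d i else 0)"
  shows "num_pos_eig H = card {i. i < n \<and> d i > 0}" "num_neg_eig H = card {i. i < n \<and> d i < 0}"
proof -
  define Dm where "Dm = mat n n (\<lambda>(i,j). if i = j then d i else (0::real))"
  have Dm: "Dm \<in> carrier_mat n n" by (simp add: Dm_def)
  have "U * Dm * transpose_mat U = (U * transpose_mat U) * H * (U * transpose_mat U)"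
    unfolding Dm_def D[symmetric] using U H
    by (simp add: assoc_mult_mat[of _ n n _ n _ n])
  hence HD: "H = U * Dm * transpose_mat U" using UU H by simp
  have "similar_mat H Dm" unfolding similar_mat_def similar_mat_wit_def
    by (rule exI[of _ U], rule exI[of _ "transpose_mat U"], use H U Dm UU HD in auto)
  hence cp: "char_poly H = char_poly Dm" by (rule char_poly_similar)
  have ut: "upper_triangular Dm" unfolding Dm_def upper_triangular_def by auto
  have "diag_mat Dm = map d [0..<n]" unfolding Dm_def diag_mat_def by auto
  hence cpD: "char_poly H = (\<Prod>a\<leftarrow>map d [0..<n]. [:- a, 1:])"
    using char_poly_upper_triangular[OF Dm ut] cp by simp
  show "num_pos_eig H = card {i. i < n \<and> d i > 0}"
    unfolding num_pos_eig_def cpD by (rule count_roots)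
  show "num_neg_eig H = card {i. i < n \<and> d i < 0}"
    unfolding num_neg_eig_def cpD by (rule count_roots)
qed


lemma sum_delta_sq:
  fixes d g :: "nat \<Rightarrow> real"
  assumes "i < n"
  shows "(\<Sum>k<n. d k * (if k = i then a else 0)^2) = d i * a^2"
    "(\<Sum>k<n. d k * (if k = i then a else 0) * g k) = d i * a * g i"
proof -
  show "(\<Sum>k<n. d k * (if k = i then a else 0)^2) = d i * a^2"
    by (subst sum.cong[OF refl, of _ _ "\<lambda>k. if k = i then d i * a^2 else 0"]) (auto simp: assms)
  show "(\<Sum>k<n. d k * (if k = i then a else 0) * g k) = d i * a * g i"
    by (subst sum.cong[OF refl, of _ _ "\<lambda>k. if k = i then d i * a * g i else 0"]) (auto simp: assms)
qed

lemma coord_fwd: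
  fixes d \<beta> :: "nat \<Rightarrow> real"
  assumes p: "(\<Sum>i<n. d i * \<beta> i ^ 2) < 0"
    and pos: "\<forall>\<alpha>. (\<exists>i<n. \<alpha> i \<noteq> 0) \<longrightarrow>
        (\<Sum>i<n. d i * \<alpha> i ^ 2) - 3/2 * (\<Sum>i<n. d i * \<alpha> i * \<beta> i)^2 / (\<Sum>i<n. d i * \<beta> i ^ 2) > 0"
  shows "card {i. i < n \<and> d i > 0} = n - 1 \<and> card {i. i < n \<and> d i < 0} = 1"
proof -
  define p where "p = (\<Sum>i<n. d i * \<beta> i ^ 2)"
  have p0: "p < 0" using p by (simp add: p_def)
  let ?F = "\<lambda>\<alpha>. (\<Sum>i<n. d i * \<alpha> i ^ 2) - 3/2 * (\<Sum>i<n. d i * \<alpha> i * \<beta> i)^2 / p"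
  have posF: "\<And>\<alpha>. (\<exists>i<n. \<alpha> i \<noteq> 0) \<Longrightarrow> ?F \<alpha> > 0" using pos by (simp add: p_def)
  have ei: "\<And>i. i < n \<Longrightarrow> ?F (\<lambda>k. if k = i then 1 else 0) = d i - 3/2 * (d i * \<beta> i)^2 / p"
  proof -
    fix i assume i: "i < n"
    have "(\<Sum>k<n. d k * (if k = i then 1 else 0) ^ 2) = d i * 1^2"
      by (rule sum_delta_sq(1)[OF i])
    moreover have "(\<Sum>k<n. d k * (if k = i then 1 else 0) * \<beta> k) = d i * 1 * \<beta> i"
      by (rule sum_delta_sq(2)[OF i])
    ultimately show "?F (\<lambda>k. if k = i then 1 else 0) = d i - 3/2 * (d i * \<beta> i)^2 / p" by simp
  qed
  have nz: "\<And>i. i < n \<Longrightarrow> d i \<noteq> 0"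
  proof
    fix i assume i: "i < n" and "d i = 0"
    have "?F (\<lambda>k. if k = i then 1 else 0) > 0" using i by (intro posF) auto
    thus False using ei[OF i] \<open>d i = 0\<close> by simp
  qed
  have le1: "\<And>i j. i < n \<Longrightarrow> j < n \<Longrightarrow> d i < 0 \<Longrightarrow> d j < 0 \<Longrightarrow> i = j"
  proof (rule ccontr)
    fix i j assume i: "i < n" and j: "j < n" and di: "d i < 0" and dj: "d j < 0" and ij: "i \<noteq> j"
    show False
    proof (cases "\<beta> i = 0")
      case True
      have "?F (\<lambda>k. if k = i then 1 else 0) > 0" using i by (intro posF) auto
      thus False using ei[OF i] True di by simp
    next
      case False
      define \<alpha> where "\<alpha> = (\<lambda>k. if k = i then d j * \<beta> j else if k = j then - (d i * \<beta> i) else (0::real))"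
      have "\<alpha> j \<noteq> 0" using False di ij by (simp add: \<alpha>_def)
      hence F: "?F \<alpha> > 0" using j by (intro posF) auto
      have a_eq: "\<alpha> = (\<lambda>k. (if k = i then d j * \<beta> j else 0) + (if k = j then - (d i * \<beta> i) else 0))"
        using ij by (auto simp: \<alpha>_def)
      have s1: "(\<Sum>k<n. d k * \<alpha> k ^ 2) = d i * (d j * \<beta> j)^2 + d j * (d i * \<beta> i)^2"
      proof -
        have "(\<Sum>k<n. d k * \<alpha> k ^ 2) = (\<Sum>k<n. d k * (if k = i then d j * \<beta> j else 0)^2
             + d k * (if k = j then - (d i * \<beta> i) else 0)^2)"
          by (intro sum.cong refl) (auto simp: \<alpha>_def ij)
        thus ?thesis using i j by (simp add: sum.distrib sum_delta_sq)
      qed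
      have s2: "(\<Sum>k<n. d k * \<alpha> k * \<beta> k) = 0"
      proof -
        have "(\<Sum>k<n. d k * \<alpha> k * \<beta> k) = (\<Sum>k<n. d k * (if k = i then d j * \<beta> j else 0) * \<beta> k
             + d k * (if k = j then - (d i * \<beta> i) else 0) * \<beta> k)"
          by (intro sum.cong refl) (auto simp: \<alpha>_def ij)
        also have "\<dots> = d i * (d j * \<beta> j) * \<beta> i + d j * (- (d i * \<beta> i)) * \<beta> j"
          using i j by (simp add: sum.distrib sum_delta_sq)
        finally show ?thesis by (simp add: algebra_simps)
      qed
      have "d i * (d j * \<beta> j)^2 \<le> 0" using di by (simp add: mult_nonpos_nonneg)
      moreover have "d j * (d i * \<beta> i)^2 \<le> 0" using dj by (simp add: mult_nonpos_nonneg)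
      ultimately show False using F s1 s2 by simp
    qed
  qed
  have ex: "\<exists>i<n. d i < 0"
  proof (rule ccontr)
    assume "\<not> ?thesis"
    hence "\<forall>i<n. d i * \<beta> i ^ 2 \<ge> 0" by auto
    hence "p \<ge> 0" unfolding p_def by (intro sum_nonneg) auto
    thus False using p0 by simp
  qed
  then obtain m where m: "m < n" "d m < 0" by auto
  have neg: "{i. i < n \<and> d i < 0} = {m}"
  proof
    show "{i. i < n \<and> d i < 0} \<subseteq> {m}" using le1 m by blast
    show "{m} \<subseteq> {i. i < n \<and> d i < 0}" using m by blast
  qed
  have "{i. i < n \<and> d i > 0} = {..<n} - {m}"
  proof
    show "{i. i < n \<and> d i > 0} \<subseteq> {..<n} - {m}" using m by force
    show "{..<n} - {m} \<subseteq> {i. i < n \<and> d i > 0}"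
    proof
      fix i assume i: "i \<in> {..<n} - {m}"
      hence "d i \<noteq> 0" using nz by blast
      moreover have "\<not> d i < 0" using le1[of i m] i m by blast
      ultimately show "i \<in> {i. i < n \<and> d i > 0}" using i by simp
    qed
  qed
  hence "card {i. i < n \<and> d i > 0} = n - 1" using m by simp
  thus ?thesis using neg by simp
qed

lemma coord_bwd:
  fixes d \<beta> :: "nat \<Rightarrow> real"
  assumes p: "(\<Sum>i<n. d i * \<beta> i ^ 2) < 0"
    and cnt: "card {i. i < n \<and> d i > 0} = n - 1" "card {i. i < n \<and> d i < 0} = 1"
    and a: "\<exists>i<n. \<alpha> i \<noteq> 0"
  shows "(\<Sum>i<n. d i * \<alpha> i ^ 2) - 3/2 * (\<Sum>i<n. d i * \<alpha> i * \<beta> i)^2 / (\<Sum>i<n. d i * \<beta> i ^ 2) > 0"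
proof -
  define A where "A = (\<Sum>i<n. d i * \<alpha> i ^ 2)"
  define B where "B = (\<Sum>i<n. d i * \<alpha> i * \<beta> i)"
  define C where "C = (\<Sum>i<n. d i * \<beta> i ^ 2)"
  have C0: "C < 0" using p by (simp add: C_def)
  from cnt(2) obtain m where neg: "{i. i < n \<and> d i < 0} = {m}" by (auto simp: card_Suc_eq)
  hence m: "m < n" "d m < 0" by auto
  let ?P = "{i. i < n \<and> d i > 0}" and ?N = "{i. i < n \<and> d i < 0}"
  have sub: "?P \<union> ?N \<subseteq> {..<n}" by auto
  have "card (?P \<union> ?N) = (n - 1) + 1"
    by (subst card_Un_disjoint) (auto simp: cnt)
  hence cU: "card (?P \<union> ?N) = card {..<n}" using m by simp
  have P: "?P \<union> ?N = {..<n}" using card_subset_eq[OF finite_lessThan sub cU] .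
  have dpos: "\<And>i. i < n \<Longrightarrow> i \<noteq> m \<Longrightarrow> d i > 0"
  proof -
    fix i assume i: "i < n" "i \<noteq> m"
    hence "i \<in> {i. i < n \<and> d i > 0} \<union> {i. i < n \<and> d i < 0}" using P by auto
    thus "d i > 0" using i neg by auto
  qed
  have split: "\<And>f. (\<Sum>i<n. f i) = f m + (\<Sum>i\<in>{..<n}-{m}. f i)"
    using m by (simp add: sum.remove)
  have bm: "\<beta> m \<noteq> 0"
  proof
    assume "\<beta> m = 0"
    hence "C = (\<Sum>i\<in>{..<n}-{m}. d i * \<beta> i ^ 2)" unfolding C_def by (subst split) simp
    also have "\<dots> \<ge> 0" by (intro sum_nonneg mult_nonneg_nonneg) (auto intro: less_imp_le dpos)
    finally show False using C0 by simp
  qed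
  define t where "t = - \<alpha> m / \<beta> m"
  have q: "A + 2 * B * t + C * t^2 \<ge> 0"
  proof -
    have "(\<Sum>i<n. d i * (\<alpha> i + t * \<beta> i)^2) =
       (\<Sum>i<n. d i * \<alpha> i ^ 2 + 2 * t * (d i * \<alpha> i * \<beta> i) + t^2 * (d i * \<beta> i ^ 2))"
      by (intro sum.cong refl) (simp add: power2_eq_square algebra_simps)
    also have "\<dots> = A + 2 * t * B + t^2 * C"
      unfolding A_def B_def C_def by (simp add: sum.distrib sum_distrib_left)
    finally have "A + 2 * B * t + C * t^2 = (\<Sum>i<n. d i * (\<alpha> i + t * \<beta> i)^2)"
      by (simp add: algebra_simps)
    also have "\<dots> = (\<Sum>i\<in>{..<n}-{m}. d i * (\<alpha> i + t * \<beta> i)^2)"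
      using bm by (subst split) (simp add: t_def)
    also have "\<dots> \<ge> 0" by (intro sum_nonneg mult_nonneg_nonneg) (auto intro: less_imp_le dpos)
    finally show ?thesis .
  qed
  have "A - 3 / 2 * B\<^sup>2 / C > 0"
  proof (rule ccontr)
    assume "\<not> A - 3 / 2 * B\<^sup>2 / C > 0"
    hence h: "A * C - 3/2 * B^2 \<ge> 0" using C0
      by (simp add: field_simps not_less)
    have "C * (A + 2 * B * t + C * t^2) \<le> 0" using q C0 by (simp add: mult_nonpos_nonneg)
    hence "(C * t + B)^2 \<le> B^2 - A * C" by (simp add: power2_eq_square algebra_simps)
    hence "(C * t + B)^2 + B^2 / 2 \<le> 0" using h by simp
    moreover have "(C * t + B)^2 \<ge> 0" "B^2 \<ge> 0" by simp_all
    ultimately have "(C * t + B)^2 = 0" "B^2 = 0" by linarith+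
    hence B0: "B = 0" and t0: "t = 0" using C0 by auto
    have "A * C \<ge> 0" using h B0 by simp
    hence "A \<le> 0" using C0 by (simp add: mult_nonneg_nonpos2 zero_le_mult_iff)
    moreover have "A \<ge> 0" using q B0 t0 by simp
    ultimately have A0: "A = 0" by simp
    have am: "\<alpha> m = 0" using t0 bm by (simp add: t_def)
    have "A = (\<Sum>i\<in>{..<n}-{m}. d i * \<alpha> i ^ 2)" unfolding A_def by (subst split) (simp add: am)
    hence "(\<Sum>i\<in>{..<n}-{m}. d i * \<alpha> i ^ 2) = 0" using A0 by simp
    hence "\<forall>i\<in>{..<n}-{m}. d i * \<alpha> i ^ 2 = 0"
      by (subst (asm) sum_nonneg_eq_0_iff) (auto intro!: mult_nonneg_nonneg intro: less_imp_le dpos)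
    hence "\<forall>i<n. \<alpha> i = 0" using dpos am by force
    thus False using a by auto
  qed
  thus ?thesis by (simp add: A_def B_def C_def)
qed


lemma diag_scalar:
  fixes a b :: "real vec"
  assumes "a \<in> carrier_vec n" "b \<in> carrier_vec n"
  shows "a \<bullet> (mat n n (\<lambda>(i,j). if i = j then d i else 0) *\<^sub>v b) = (\<Sum>i<n. d i * a $ i * b $ i)"
proof -
  have "\<And>i. i < n \<Longrightarrow> (mat n n (\<lambda>(i,j). if i = j then d i else 0) *\<^sub>v b) $ i = d i * b $ i"
  proof -
    fix i assume i: "i < n"
    have "(mat n n (\<lambda>(i,j). if i = j then d i else 0) *\<^sub>v b) $ i = (\<Sum>k<n. (if i = k then d i else 0) * b $ k)"
      using i assms by (simp add: scalar_prod_def row_def atLeast0LessThan)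
    also have "\<dots> = (\<Sum>k<n. if k = i then d i * b $ i else 0)" by (intro sum.cong) auto
    also have "\<dots> = d i * b $ i" using i by simp
    finally show "(mat n n (\<lambda>(i,j). if i = j then d i else 0) *\<^sub>v b) $ i = d i * b $ i" .
  qed
  thus ?thesis using assms by (simp add: scalar_prod_def atLeast0LessThan mult_ac)
qed

lemma quad_coord:
  fixes M U :: "real mat"
  assumes M: "M \<in> carrier_mat n n" and U: "U \<in> carrier_mat n n"
    and UU: "U * transpose_mat U = 1\<^sub>m n"
    and D: "transpose_mat U * M * U = mat n n (\<lambda>(i,j). if i = j then d i else 0)"
    and x: "x \<in> carrier_vec n" and y: "y \<in> carrier_vec n"
  shows "x \<bullet> (M *\<^sub>v y) = (\<Sum>i<n. d i * (transpose_mat U *\<^sub>v x) $ i * (transpose_mat U *\<^sub>v y) $ i)"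
proof -
  define Dm where "Dm = mat n n (\<lambda>(i,j). if i = j then d i else (0::real))"
  have Dm: "Dm \<in> carrier_mat n n" by (simp add: Dm_def)
  have "U * Dm * transpose_mat U = (U * transpose_mat U) * M * (U * transpose_mat U)"
    unfolding Dm_def D[symmetric] using U M
    by (simp add: assoc_mult_mat[of _ n n _ n _ n])
  hence MD: "M = U * Dm * transpose_mat U" using UU M by simp
  have "M *\<^sub>v y = U *\<^sub>v (Dm *\<^sub>v (transpose_mat U *\<^sub>v y))"
    unfolding MD using U Dm y by (simp add: assoc_mult_mat_vec[of _ n n _ n])
  hence "x \<bullet> (M *\<^sub>v y) = (transpose_mat U *\<^sub>v x) \<bullet> (Dm *\<^sub>v (transpose_mat U *\<^sub>v y))"
    using transpose_vec_mult_scalar[OF U _ x, of "Dm *\<^sub>v (transpose_mat U *\<^sub>v y)"] U Dm y by simp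
  also have "\<dots> = (\<Sum>i<n. d i * (transpose_mat U *\<^sub>v x) $ i * (transpose_mat U *\<^sub>v y) $ i)"
    unfolding Dm_def by (rule diag_scalar, use U x y in auto)
  finally show ?thesis .
qed

lemma matrix_equiv:
  fixes M :: "real mat"
  assumes M: "M \<in> carrier_mat n n" and sym: "transpose_mat M = M" and y: "yv \<in> carrier_vec n"
    and p: "yv \<bullet> (M *\<^sub>v yv) < 0"
  shows "(\<forall>xv\<in>carrier_vec n. xv \<noteq> 0\<^sub>v n \<longrightarrow>
      xv \<bullet> (M *\<^sub>v xv) - 3/2 * (xv \<bullet> (M *\<^sub>v yv))^2 / (yv \<bullet> (M *\<^sub>v yv)) > 0)
    \<longleftrightarrow> has_signature M (n - 1) 1"
proof -
  from spectral[OF M sym] obtain U d where U: "U \<in> carrier_mat n n"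
    and UU: "transpose_mat U * U = 1\<^sub>m n" "U * transpose_mat U = 1\<^sub>m n"
    and D: "transpose_mat U * M * U = mat n n (\<lambda>(i,j). if i = j then d i else 0)" by auto
  note cnt = eig_counts[OF M U UU D]
  define \<beta> where "\<beta> = (\<lambda>i. (transpose_mat U *\<^sub>v yv) $ i)"
  have UT: "transpose_mat U \<in> carrier_mat n n" using U by simp
  have qc: "\<And>x y. x \<in> carrier_vec n \<Longrightarrow> y \<in> carrier_vec n \<Longrightarrow> x \<bullet> (M *\<^sub>v y) =
      (\<Sum>i<n. d i * (transpose_mat U *\<^sub>v x) $ i * (transpose_mat U *\<^sub>v y) $ i)"
    by (rule quad_coord[OF M U UU(2) D])
  have py: "yv \<bullet> (M *\<^sub>v yv) = (\<Sum>i<n. d i * \<beta> i ^ 2)"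
    unfolding qc[OF y y] \<beta>_def by (simp add: power2_eq_square mult_ac)
  have p': "(\<Sum>i<n. d i * \<beta> i ^ 2) < 0" using p py by simp
  let ?F = "\<lambda>\<alpha>. (\<Sum>i<n. d i * \<alpha> i ^ 2) - 3/2 * (\<Sum>i<n. d i * \<alpha> i * \<beta> i)^2 / (\<Sum>i<n. d i * \<beta> i ^ 2)"
  have Fx: "\<And>xv. xv \<in> carrier_vec n \<Longrightarrow>
      xv \<bullet> (M *\<^sub>v xv) - 3/2 * (xv \<bullet> (M *\<^sub>v yv))^2 / (yv \<bullet> (M *\<^sub>v yv)) = ?F (\<lambda>i. (transpose_mat U *\<^sub>v xv) $ i)"
    unfolding py by (subst (1 2) qc, auto simp: y \<beta>_def power2_eq_square mult_ac)
  show ?thesis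
  proof
    assume H: "\<forall>xv\<in>carrier_vec n. xv \<noteq> 0\<^sub>v n \<longrightarrow>
      xv \<bullet> (M *\<^sub>v xv) - 3/2 * (xv \<bullet> (M *\<^sub>v yv))^2 / (yv \<bullet> (M *\<^sub>v yv)) > 0"
    have "\<forall>\<alpha>. (\<exists>i<n. \<alpha> i \<noteq> 0) \<longrightarrow> ?F \<alpha> > 0"
    proof (intro allI impI)
      fix \<alpha> :: "nat \<Rightarrow> real" assume a: "\<exists>i<n. \<alpha> i \<noteq> 0"
      define av where "av = vec n \<alpha>"
      define xv where "xv = U *\<^sub>v av"
      have xv: "xv \<in> carrier_vec n" using U by (simp add: xv_def av_def)
      have Ux: "transpose_mat U *\<^sub>v xv = av" unfolding xv_def using U UU
        by (simp add: assoc_mult_mat_vec[symmetric, of _ n n _ n] av_def)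
      have "xv \<noteq> 0\<^sub>v n"
      proof
        assume "xv = 0\<^sub>v n"
        moreover have "transpose_mat U *\<^sub>v 0\<^sub>v n = 0\<^sub>v n" using UT
          by (intro eq_vecI) (auto simp: scalar_prod_def)
        ultimately have "av = 0\<^sub>v n" using Ux by simp
        thus False using a by (auto simp: av_def vec_eq_iff)
      qed
      hence "?F (\<lambda>i. (transpose_mat U *\<^sub>v xv) $ i) > 0" using H xv Fx[OF xv] by metis
      moreover have "?F (\<lambda>i. (transpose_mat U *\<^sub>v xv) $ i) = ?F \<alpha>"
        unfolding Ux av_def by (intro arg_cong2[where f="(-)"] arg_cong2[where f="(/)"] arg_cong2[where f="(*)"] 
           arg_cong[where f="\<lambda>x. x^2"] sum.cong refl) auto
      ultimately show "?F \<alpha> > 0" by simp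
    qed
    from coord_fwd[OF p' this] show "has_signature M (n - 1) 1"
      unfolding has_signature_def cnt by simp
  next
    assume "has_signature M (n - 1) 1"
    hence c: "card {i. i < n \<and> d i > 0} = n - 1" "card {i. i < n \<and> d i < 0} = 1"
      unfolding has_signature_def cnt by auto
    show "\<forall>xv\<in>carrier_vec n. xv \<noteq> 0\<^sub>v n \<longrightarrow>
      xv \<bullet> (M *\<^sub>v xv) - 3/2 * (xv \<bullet> (M *\<^sub>v yv))^2 / (yv \<bullet> (M *\<^sub>v yv)) > 0"
    proof (intro ballI impI)
      fix xv :: "real vec" assume xv: "xv \<in> carrier_vec n" and nz: "xv \<noteq> 0\<^sub>v n"
      have "\<exists>i<n. (transpose_mat U *\<^sub>v xv) $ i \<noteq> 0"
      proof (rule ccontr)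
        assume "\<not> ?thesis"
        hence "transpose_mat U *\<^sub>v xv = 0\<^sub>v n" using UT by (intro eq_vecI) auto
        moreover have "U *\<^sub>v 0\<^sub>v n = 0\<^sub>v n" using U
          by (intro eq_vecI) (auto simp: scalar_prod_def)
        ultimately have "U *\<^sub>v (transpose_mat U *\<^sub>v xv) = 0\<^sub>v n" by simp
        moreover have "U *\<^sub>v (transpose_mat U *\<^sub>v xv) = xv" using U UU xv
          by (simp add: assoc_mult_mat_vec[symmetric, of _ n n _ n])
        ultimately show False using nz by simp
      qed
      from coord_bwd[OF p' c this] show "xv \<bullet> (M *\<^sub>v xv) - 3/2 * (xv \<bullet> (M *\<^sub>v yv))^2 / (yv \<bullet> (M *\<^sub>v yv)) > 0"
        using Fx[OF xv] by simp
    qed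
  qed
qed


definition Tc :: "(nat \<Rightarrow> nat \<Rightarrow> nat \<Rightarrow> real) \<Rightarrow> nat \<Rightarrow> nat \<Rightarrow> nat \<Rightarrow> real" where
  "Tc c p q r = c p q r + c p r q + c q p r + c q r p + c r p q + c r q p"

definition Atri :: "nat \<Rightarrow> (nat \<Rightarrow> nat \<Rightarrow> nat \<Rightarrow> real) \<Rightarrow> (nat \<Rightarrow> 'a::real_normed_field) \<Rightarrow> (nat \<Rightarrow> 'a) \<Rightarrow> (nat \<Rightarrow> 'a) \<Rightarrow> 'a" where
  "Atri h c u v w = (\<Sum>p=1..h. \<Sum>q=1..h. \<Sum>r=1..h. of_real (Tc c p q r) * u p * v q * w r)"

definition ev :: "nat \<Rightarrow> nat \<Rightarrow> 'a::real_normed_field" where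
  "ev i = (\<lambda>p. if p = i then 1 else 0)"

lemma Tc_sym: "Tc c q p r = Tc c p q r" "Tc c p r q = Tc c p q r"
  unfolding Tc_def by simp_all

lemma sum3_swap12: "(\<Sum>p\<in>S. \<Sum>q\<in>S. \<Sum>r\<in>S. F p q r) = (\<Sum>p\<in>S. \<Sum>q\<in>S. \<Sum>r\<in>S. F q p r)"
  by (rule sum.swap)

lemma sum3_swap23: "(\<Sum>p\<in>S. \<Sum>q\<in>S. \<Sum>r\<in>S. F p q r) = (\<Sum>p\<in>S. \<Sum>q\<in>S. \<Sum>r\<in>S. F p r q)"
  by (intro sum.cong refl sum.swap)

lemma Atri_sym12: "Atri h c u v w = Atri h c v u w"
  unfolding Atri_def by (subst sum3_swap12) (simp add: Tc_sym mult_ac)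

lemma Atri_sym23: "Atri h c u v w = Atri h c u w v"
  unfolding Atri_def by (subst sum3_swap23) (simp add: Tc_sym mult_ac)

lemma Atri_add1: "Atri h c (\<lambda>p. u p + v p) w s = Atri h c u w s + Atri h c v w s"
  unfolding Atri_def by (simp add: sum.distrib algebra_simps)
lemma Atri_add2: "Atri h c w (\<lambda>p. u p + v p) s = Atri h c w u s + Atri h c w v s"
  unfolding Atri_def by (simp add: sum.distrib algebra_simps)
lemma Atri_add3: "Atri h c w s (\<lambda>p. u p + v p) = Atri h c w s u + Atri h c w s v"
  unfolding Atri_def by (simp add: sum.distrib algebra_simps)
lemma Atri_mult1: "Atri h c (\<lambda>p. k * u p) w s = k * Atri h c u w s"
  unfolding Atri_def by (simp add: sum_distrib_left algebra_simps)
lemma Atri_mult2: "Atri h c w (\<lambda>p. k * u p) s = k * Atri h c w u s"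
  unfolding Atri_def by (simp add: sum_distrib_left algebra_simps)
lemma Atri_mult3: "Atri h c w s (\<lambda>p. k * u p) = k * Atri h c w s u"
  unfolding Atri_def by (simp add: sum_distrib_left algebra_simps)

lemmas Atri_lin = Atri_add1 Atri_add2 Atri_add3 Atri_mult1 Atri_mult2 Atri_mult3

lemma cubic_Atri: "cubic_form h c z = Atri h c z z z / 6"
proof -
  define G where "G = (\<lambda>p q r. of_real (c p q r) * z p * z q * z r)"
  let ?S = "\<lambda>F. (\<Sum>p=1..h. \<Sum>q=1..h. \<Sum>r=1..h. F p q r)"
  have "Atri h c z z z = ?S (\<lambda>p q r. G p q r + G p r q + G q p r + G q r p + G r p q + G r q p)"
    unfolding Atri_def G_def Tc_def by (intro sum.cong refl) (simp add: algebra_simps)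
  also have "\<dots> = ?S G + ?S (\<lambda>p q r. G p r q) + ?S (\<lambda>p q r. G q p r) + ?S (\<lambda>p q r. G q r p)
      + ?S (\<lambda>p q r. G r p q) + ?S (\<lambda>p q r. G r q p)"
    by (simp add: sum.distrib)
  also have "?S (\<lambda>p q r. G p r q) = ?S G" by (rule sum3_swap23[symmetric])
  also have "?S (\<lambda>p q r. G q p r) = ?S G" by (rule sum3_swap12[symmetric])
  also have "?S (\<lambda>p q r. G q r p) = ?S G" by (subst sum3_swap12, subst sum3_swap23, rule refl)
  also have "?S (\<lambda>p q r. G r p q) = ?S G" by (subst sum3_swap23, subst sum3_swap12, rule refl)
  also have "?S (\<lambda>p q r. G r q p) = ?S G"
    by (subst sum3_swap12, subst sum3_swap23, subst sum3_swap12, rule refl)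
  finally have "Atri h c z z z = 6 * ?S G" by simp
  moreover have "cubic_form h c z = ?S G" unfolding cubic_form_def G_def ..
  ultimately show ?thesis by simp
qed

lemma deriv_cubic_poly:
  fixes a b c d :: "'a::real_normed_field"
  shows "deriv (\<lambda>t. a + b * t + c * t^2 + d * t^3) 0 = b"
proof -
  have "((\<lambda>t. a + b * t + c * t^2 + d * t^3) has_field_derivative (b + c * (2 * 0) + d * (3 * 0^2))) (at 0)"
    by (auto intro!: derivative_eq_intros)
  thus ?thesis by (intro DERIV_imp_deriv) simp
qed

lemma pd_poly:
  fixes F :: "(nat \<Rightarrow> 'a::real_normed_field) \<Rightarrow> 'a"
  assumes "\<And>t. F (\<lambda>p. z p + t * ev i p) = a + b * t + c * t^2 + d * t^3"
  shows "pd i F z = b"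
proof -
  have "\<And>t. z(i := z i + t) = (\<lambda>p. z p + t * ev i p)" by (auto simp: ev_def)
  hence "(\<lambda>t. F (z(i := z i + t))) = (\<lambda>t. a + b * t + c * t^2 + d * t^3)" using assms by simp
  thus ?thesis unfolding pd_def using deriv_cubic_poly by metis
qed

lemma pd_cubic: "pd i (cubic_form h c) z = Atri h c (ev i) z z / 2"
proof (rule pd_poly)
  fix t
  show "cubic_form h c (\<lambda>p. z p + t * ev i p) = cubic_form h c z + Atri h c (ev i) z z / 2 * t
     + Atri h c (ev i) (ev i) z / 2 * t^2 + cubic_form h c (ev i) * t^3"
    unfolding cubic_Atri
    by (simp add: Atri_lin power2_eq_square power3_eq_cube field_simps, simp add: Atri_sym12 Atri_sym23 algebra_simps)
qed


lemma pd_cubic_fun: "pd i (cubic_form h c) = (\<lambda>z. Atri h c (ev i) z z / 2)"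
  by (rule ext) (rule pd_cubic)

lemma pd_quad: "pd j (\<lambda>w. Atri h c (ev i) w w / 2) z = Atri h c (ev i) (ev j) z"
proof (rule pd_poly)
  fix t
  show "Atri h c (ev i) (\<lambda>p. z p + t * ev j p) (\<lambda>p. z p + t * ev j p) / 2 =
    Atri h c (ev i) z z / 2 + Atri h c (ev i) (ev j) z * t + Atri h c (ev i) (ev j) (ev j) / 2 * t^2 + 0 * t^3"
    by (simp add: Atri_lin power2_eq_square field_simps, simp add: Atri_sym23 algebra_simps)
qed

lemma pd_const: "pd j (\<lambda>w. a) z = 0"
  by (rule pd_poly[where a=a and c=0 and d=0]) simp

lemma pd_coord: "pd j (\<lambda>w. w k) z = ev j k"
  by (rule pd_poly[where a="z k" and c=0 and d=0]) (simp add: mult.commute)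

lemma pd_neg_cubic: "pd j (\<lambda>w. - (Atri h c w w w / 6)) z = - (Atri h c (ev j) z z / 2)"
proof (rule pd_poly)
  fix t
  show "- (Atri h c (\<lambda>p. z p + t * ev j p) (\<lambda>p. z p + t * ev j p) (\<lambda>p. z p + t * ev j p) / 6) =
    - (Atri h c z z z / 6) + - (Atri h c (ev j) z z / 2) * t + - (Atri h c (ev j) (ev j) z / 2) * t^2
    + - (Atri h c (ev j) (ev j) (ev j) / 6) * t^3"
    by (simp add: Atri_lin power2_eq_square power3_eq_cube field_simps, simp add: Atri_sym12 Atri_sym23 algebra_simps)
qed

lemma hessian_idx:
  assumes "i < h" "j < h"
  shows "hessian h c y $$ (i,j) = Atri h c (ev (j+1)) (ev (i+1)) y"
  using assms unfolding hessian_def by (simp add: pd_cubic_fun pd_quad)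

lemma omega_idx:
  assumes "k < 2*h+2"
  shows "omega h c z $ k = (if k = 0 then - (Atri h c z z z / 6) else if k \<le> h then Atri h c (ev k) z z / 2
     else if k = h+1 then 1 else z (k - (h+1)))"
  using assms unfolding omega_def by (simp add: cubic_Atri pd_cubic)

lemma domega_idx:
  assumes "k < 2*h+2"
  shows "domega h c i z $ k = (if k = 0 then - (Atri h c (ev i) z z / 2) else if k \<le> h then Atri h c (ev k) (ev i) z
     else if k = h+1 then 0 else ev i (k - (h+1)))"
proof -
  have "domega h c i z $ k = pd i (\<lambda>w. omega h c w $ k) z" unfolding domega_def using assms by simp
  also have "(\<lambda>w. omega h c w $ k) = (\<lambda>w. if k = 0 then - (Atri h c w w w / 6) else if k \<le> h then Atri h c (ev k) w w / 2
     else if k = h+1 then 1 else w (k - (h+1)))" using omega_idx[OF assms] by auto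
  finally show ?thesis
    by (cases "k = 0"; cases "k \<le> h"; cases "k = h+1") (auto simp: pd_neg_cubic pd_quad pd_const pd_coord)
qed


definition cR :: "(nat \<Rightarrow> real) \<Rightarrow> nat \<Rightarrow> complex" where "cR u = (\<lambda>p. complex_of_real (u p))"

lemma i2: "\<i> * (\<i> * x) = - (x::complex)"
  by (simp add: mult.assoc[symmetric])

lemma G00_alg:
  fixes X Y :: "nat \<Rightarrow> real"
  defines "u \<equiv> \<lambda>p. cR X p + \<i> * cR Y p" and "ub \<equiv> \<lambda>p. cR X p + (- \<i>) * cR Y p"
  shows "-(Atri h c u u u)/6 + Atri h c ub ub ub/6 + Atri h c ub u u/2 - Atri h c u ub ub/2
    = \<i> * (4/3) * Atri h c (cR Y) (cR Y) (cR Y)"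
  unfolding u_def ub_def
  apply (simp only: Atri_lin)
  apply (simp add: Atri_sym12[of h c "cR Y" "cR X"] Atri_sym23[of h c _ "cR Y" "cR X"])
  apply (simp add: algebra_simps i2)
  apply (simp add: field_simps)
  done

lemma Gj0_alg:
  fixes X Y E :: "nat \<Rightarrow> real"
  defines "u \<equiv> \<lambda>p. cR X p + \<i> * cR Y p" and "ub \<equiv> \<lambda>p. cR X p + (- \<i>) * cR Y p"
  shows "- (Atri h c (cR E) u u / 2) + Atri h c ub (cR E) u - Atri h c (cR E) ub ub / 2
    = 2 * Atri h c (cR E) (cR Y) (cR Y)"
  unfolding u_def ub_def
  by ((simp only: Atri_lin); (simp add: Atri_sym12 Atri_sym23)?; (simp add: algebra_simps i2)?; (simp add: field_simps)?)

lemma G0l_alg: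
  fixes X Y E :: "nat \<Rightarrow> real"
  defines "u \<equiv> \<lambda>p. cR X p + \<i> * cR Y p" and "ub \<equiv> \<lambda>p. cR X p + (- \<i>) * cR Y p"
  shows "Atri h c (cR E) ub ub / 2 + Atri h c (cR E) u u / 2 - Atri h c u (cR E) ub
    = - 2 * Atri h c (cR E) (cR Y) (cR Y)"
  unfolding u_def ub_def
  by ((simp only: Atri_lin); (simp add: Atri_sym12 Atri_sym23)?; (simp add: algebra_simps i2)?; (simp add: field_simps)?)

lemma Gjl_alg:
  fixes X Y E F :: "nat \<Rightarrow> real"
  defines "u \<equiv> \<lambda>p. cR X p + \<i> * cR Y p" and "ub \<equiv> \<lambda>p. cR X p + (- \<i>) * cR Y p"
  shows "Atri h c (cR F) (cR E) u - Atri h c (cR E) (cR F) ub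
    = 2 * \<i> * Atri h c (cR E) (cR F) (cR Y)"
  unfolding u_def ub_def
  by ((simp only: Atri_lin); (simp add: Atri_sym12 Atri_sym23)?; (simp add: algebra_simps i2)?; (simp add: field_simps)?)


lemma Atri_ev:
  assumes k: "k \<in> {1..h}"
  shows "Atri h c (ev k) u v = (\<Sum>q=1..h. \<Sum>r=1..h. of_real (Tc c k q r) * u q * v r)"
proof -
  have "Atri h c (ev k) u v = (\<Sum>p=1..h. if p = k then (\<Sum>q=1..h. \<Sum>r=1..h. of_real (Tc c k q r) * u q * v r) else 0)"
    unfolding Atri_def ev_def by (intro sum.cong refl) auto
  also have "\<dots> = (\<Sum>q=1..h. \<Sum>r=1..h. of_real (Tc c k q r) * u q * v r)" using k by simp
  finally show ?thesis .
qed

lemma Atri_ev_sum: "(\<Sum>k=1..h. w k * Atri h c (ev k) u v) = Atri h c w u v"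
proof -
  have "(\<Sum>k=1..h. w k * Atri h c (ev k) u v) = (\<Sum>k=1..h. w k * (\<Sum>q=1..h. \<Sum>r=1..h. of_real (Tc c k q r) * u q * v r))"
    by (intro sum.cong refl) (simp add: Atri_ev)
  also have "\<dots> = Atri h c w u v" unfolding Atri_def
    by (simp add: sum_distrib_left mult_ac)
  finally show ?thesis .
qed

lemma Atri_ev_sum': "(\<Sum>k=Suc 0..h. w k * Atri h c (ev k) u v) = Atri h c w u v"
  using Atri_ev_sum by simp

lemma Atri_real: "Atri h c (cR u) (cR v) (cR w) = complex_of_real (Atri h c u v w)"
  unfolding Atri_def cR_def by simp

lemma ev_cR: "(ev k :: nat \<Rightarrow> complex) = cR (ev k)"
  by (auto simp: ev_def cR_def)

lemma Atri_cnj: "cnj (Atri h c u v w) = Atri h c (\<lambda>p. cnj (u p)) (\<lambda>p. cnj (v p)) (\<lambda>p. cnj (w p))"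
  unfolding Atri_def by (simp add: cnj_sum)

lemma cnj_ev: "(\<lambda>p. cnj (ev k p :: complex)) = ev k"
  by (auto simp: ev_def)

lemma sum_ev_right: "j \<in> {1..h} \<Longrightarrow> (\<Sum>k=1..h. f k * (ev j k :: complex)) = f j"
  unfolding ev_def by (simp add: if_distrib[where f="\<lambda>x. _ * x"] cong: if_cong)

lemma sum_ev_left: "j \<in> {1..h} \<Longrightarrow> (\<Sum>k=1..h. (ev j k :: complex) * f k) = f j"
  unfolding ev_def by (simp add: if_distrib[where f="\<lambda>x. x * _"] cong: if_cong)

lemma sympl_split:
  "sympl h v w = v $ 0 * w $ (h+1) - v $ (h+1) * w $ 0 + (\<Sum>k=1..h. v $ k * w $ (h+1+k) - v $ (h+1+k) * w $ k)"
  unfolding sympl_def by (subst sum.atLeast_Suc_atMost) auto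

lemma z_decomp: "z = (\<lambda>p. cR (\<lambda>p. Re (z p)) p + \<i> * cR (\<lambda>p. Im (z p)) p)"
  by (auto simp: cR_def complex_eq_iff)

lemma zb_decomp: "(\<lambda>p. cnj (z p)) = (\<lambda>p. cR (\<lambda>p. Re (z p)) p + (- \<i>) * cR (\<lambda>p. Im (z p)) p)"
  by (auto simp: cR_def complex_eq_iff)

lemma dim_omega[simp]: "dim_vec (omega h c z) = 2*h+2" by (simp add: omega_def)
lemma dim_domega[simp]: "dim_vec (domega h c i z) = 2*h+2" by (simp add: domega_def)
lemma cconj_idx: "k < dim_vec v \<Longrightarrow> cconj v $ k = cnj (v $ k)" by (simp add: cconj_def)

lemma G00:
  "sympl h (omega h c z) (cconj (omega h c z)) = \<i> * (4/3) * complex_of_real (Atri h c (\<lambda>p. Im (z p)) (\<lambda>p. Im (z p)) (\<lambda>p. Im (z p)))"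
proof -
  let ?w = "omega h c z"
  let ?zb = "\<lambda>p. cnj (z p)"
  have s: "(\<Sum>k=1..h. ?w $ k * cconj ?w $ (h+1+k) - ?w $ (h+1+k) * cconj ?w $ k)
     = (\<Sum>k=1..h. cnj (z k) * Atri h c (ev k) z z / 2 - z k * Atri h c (ev k) ?zb ?zb / 2)"
    by (intro sum.cong refl) (auto simp: cconj_idx omega_idx Atri_cnj cnj_ev)
  have "sympl h ?w (cconj ?w) = - (Atri h c z z z / 6) - cnj (- (Atri h c z z z / 6))
     + (Atri h c ?zb z z / 2 - Atri h c z ?zb ?zb / 2)"
    unfolding sympl_split s
    by (simp add: cconj_idx omega_idx sum_subtractf sum_divide_distrib[symmetric] Atri_ev_sum')
  also have "\<dots> = -(Atri h c z z z)/6 + Atri h c ?zb ?zb ?zb/6 + Atri h c ?zb z z/2 - Atri h c z ?zb ?zb/2"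
    by (simp add: Atri_cnj)
  also have "\<dots> = \<i> * (4/3) * Atri h c (cR (\<lambda>p. Im (z p))) (cR (\<lambda>p. Im (z p))) (cR (\<lambda>p. Im (z p)))"
  proof -
    define X where "X = (\<lambda>p. Re (z p))"
    define Y where "Y = (\<lambda>p. Im (z p))"
    have zb: "?zb = (\<lambda>p. cR X p + (- \<i>) * cR Y p)" unfolding X_def Y_def by (rule zb_decomp)
    have z: "z = (\<lambda>p. cR X p + \<i> * cR Y p)" unfolding X_def Y_def by (rule z_decomp)
    show ?thesis unfolding Y_def[symmetric] unfolding zb unfolding z by (rule G00_alg)
  qed
  finally show ?thesis by (simp add: Atri_real)
qed

lemma cnj_ev_pt[simp]: "cnj (ev j k :: complex) = ev j k" by (simp add: ev_def)

lemma sum_ev_left': "j \<in> {1..h} \<Longrightarrow> (\<Sum>k=Suc 0..h. (ev j k :: complex) * f k) = f j"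
  using sum_ev_left[of j h f] by simp
lemma sum_ev_right': "j \<in> {1..h} \<Longrightarrow> (\<Sum>k=Suc 0..h. f k * (ev j k :: complex)) = f j"
  using sum_ev_right[of j h f] by simp

lemma sum_ev_left2: "j \<in> {1..h} \<Longrightarrow> (\<Sum>k=Suc 0..h. (ev j k :: complex) * f k / 2) = f j / 2"
  using sum_ev_left'[of j h f] by (simp add: sum_divide_distrib[symmetric])
lemma sum_ev_right2: "j \<in> {1..h} \<Longrightarrow> (\<Sum>k=Suc 0..h. f k * (ev j k :: complex) / 2) = f j / 2"
  using sum_ev_right'[of j h f] by (simp add: sum_divide_distrib[symmetric])

lemma zdecomp_rule:
  assumes "\<And>X Y. P (\<lambda>p. cR X p + \<i> * cR Y p) (\<lambda>p. cR X p + (- \<i>) * cR Y p) Y"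
  shows "P z (\<lambda>p. cnj (z p)) (\<lambda>p. Im (z p))"
proof -
  define X where "X = (\<lambda>p. Re (z p))"
  define Y where "Y = (\<lambda>p. Im (z p))"
  have zb: "(\<lambda>p. cnj (z p)) = (\<lambda>p. cR X p + (- \<i>) * cR Y p)" unfolding X_def Y_def by (rule zb_decomp)
  have z: "z = (\<lambda>p. cR X p + \<i> * cR Y p)" unfolding X_def Y_def by (rule z_decomp)
  show ?thesis unfolding Y_def[symmetric] unfolding zb unfolding z by (rule assms)
qed

lemma Gj0:
  assumes j: "j \<in> {1..h}"
  shows "sympl h (domega h c j z) (cconj (omega h c z)) = 2 * complex_of_real (Atri h c (ev j) (\<lambda>p. Im (z p)) (\<lambda>p. Im (z p)))"
proof -
  let ?w = "omega h c z" and ?d = "domega h c j z"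
  let ?zb = "\<lambda>p. cnj (z p)"
  have s: "(\<Sum>k=1..h. ?d $ k * cconj ?w $ (h+1+k) - ?d $ (h+1+k) * cconj ?w $ k)
     = (\<Sum>k=1..h. cnj (z k) * Atri h c (ev k) (ev j) z - ev j k * (Atri h c (ev k) ?zb ?zb / 2))"
    by (intro sum.cong refl) (auto simp: cconj_idx omega_idx domega_idx Atri_cnj cnj_ev)
  have "sympl h ?d (cconj ?w) = - (Atri h c (ev j) z z / 2) + Atri h c ?zb (ev j) z - Atri h c (ev j) ?zb ?zb / 2"
    unfolding sympl_split s using j
    by (simp add: cconj_idx omega_idx domega_idx sum_subtractf Atri_ev_sum' sum_ev_left' sum_ev_left2)
  also have "\<dots> = 2 * Atri h c (cR (ev j)) (cR (\<lambda>p. Im (z p))) (cR (\<lambda>p. Im (z p)))"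
    unfolding ev_cR by (rule zdecomp_rule[where P="\<lambda>z zb Y. - (Atri h c (cR (ev j)) z z / 2) + Atri h c zb (cR (ev j)) z
      - Atri h c (cR (ev j)) zb zb / 2 = 2 * Atri h c (cR (ev j)) (cR Y) (cR Y)"], rule Gj0_alg)
  finally show ?thesis by (simp add: Atri_real)
qed

lemma G0l:
  assumes l: "l \<in> {1..h}"
  shows "sympl h (omega h c z) (cconj (domega h c l z)) = - 2 * complex_of_real (Atri h c (ev l) (\<lambda>p. Im (z p)) (\<lambda>p. Im (z p)))"
proof -
  let ?w = "omega h c z" and ?d = "domega h c l z"
  let ?zb = "\<lambda>p. cnj (z p)"
  have s: "(\<Sum>k=1..h. ?w $ k * cconj ?d $ (h+1+k) - ?w $ (h+1+k) * cconj ?d $ k)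
     = (\<Sum>k=1..h. Atri h c (ev k) z z / 2 * ev l k - z k * Atri h c (ev k) (ev l) ?zb)"
    by (intro sum.cong refl) (auto simp: cconj_idx omega_idx domega_idx Atri_cnj cnj_ev)
  have "sympl h ?w (cconj ?d) = Atri h c (ev l) ?zb ?zb / 2 + Atri h c (ev l) z z / 2 - Atri h c z (ev l) ?zb"
    unfolding sympl_split s using l
    by (simp add: cconj_idx omega_idx domega_idx sum_subtractf Atri_ev_sum' sum_ev_right' sum_ev_right2 Atri_cnj cnj_ev)
  also have "\<dots> = - 2 * Atri h c (cR (ev l)) (cR (\<lambda>p. Im (z p))) (cR (\<lambda>p. Im (z p)))"
    unfolding ev_cR by (rule zdecomp_rule[where P="\<lambda>z zb Y. Atri h c (cR (ev l)) zb zb / 2 + Atri h c (cR (ev l)) z z / 2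
      - Atri h c z (cR (ev l)) zb = - 2 * Atri h c (cR (ev l)) (cR Y) (cR Y)"], rule G0l_alg)
  finally show ?thesis by (simp add: Atri_real)
qed

lemma Gjl:
  assumes j: "j \<in> {1..h}" and l: "l \<in> {1..h}"
  shows "sympl h (domega h c j z) (cconj (domega h c l z)) = 2 * \<i> * complex_of_real (Atri h c (ev j) (ev l) (\<lambda>p. Im (z p)))"
proof -
  let ?d = "domega h c j z" and ?e = "domega h c l z"
  let ?zb = "\<lambda>p. cnj (z p)"
  have s: "(\<Sum>k=1..h. ?d $ k * cconj ?e $ (h+1+k) - ?d $ (h+1+k) * cconj ?e $ k)
     = (\<Sum>k=1..h. Atri h c (ev k) (ev j) z * ev l k - ev j k * Atri h c (ev k) (ev l) ?zb)"
    by (intro sum.cong refl) (auto simp: cconj_idx omega_idx domega_idx Atri_cnj cnj_ev)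
  have "sympl h ?d (cconj ?e) = Atri h c (ev l) (ev j) z - Atri h c (ev j) (ev l) ?zb"
    unfolding sympl_split s using j l
    by (simp add: cconj_idx omega_idx domega_idx sum_subtractf sum_ev_right' sum_ev_left')
  also have "\<dots> = 2 * \<i> * Atri h c (cR (ev j)) (cR (ev l)) (cR (\<lambda>p. Im (z p)))"
    unfolding ev_cR by (rule zdecomp_rule[where P="\<lambda>z zb Y. Atri h c (cR (ev l)) (cR (ev j)) z
      - Atri h c (cR (ev j)) (cR (ev l)) zb = 2 * \<i> * Atri h c (cR (ev j)) (cR (ev l)) (cR Y)"], rule Gjl_alg)
  finally show ?thesis by (simp add: Atri_real)
qed


lemma sympl_lin1:
  assumes "finite J"
  shows "sympl h (vec (2*h+2) (\<lambda>k. \<Sum>j\<in>J. a j * V j $ k)) w = (\<Sum>j\<in>J. a j * sympl h (V j) w)"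
proof -
  have "sympl h (vec (2*h+2) (\<lambda>k. \<Sum>j\<in>J. a j * V j $ k)) w =
     (\<Sum>k=0..h. \<Sum>j\<in>J. a j * (V j $ k * w $ (h+1+k) - V j $ (h+1+k) * w $ k))"
    unfolding sympl_def
    by (intro sum.cong refl) (auto simp: right_diff_distrib sum_subtractf sum_distrib_right mult.assoc)
  also have "\<dots> = (\<Sum>j\<in>J. \<Sum>k=0..h. a j * (V j $ k * w $ (h+1+k) - V j $ (h+1+k) * w $ k))"
    by (rule sum.swap)
  also have "\<dots> = (\<Sum>j\<in>J. a j * sympl h (V j) w)"
    unfolding sympl_def by (simp add: sum_distrib_left)
  finally show ?thesis .
qed

lemma sympl_lin2:
  assumes "finite J" and dims: "\<And>j. j \<in> J \<Longrightarrow> dim_vec (V j) = 2*h+2"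
  shows "sympl h v (cconj (vec (2*h+2) (\<lambda>k. \<Sum>j\<in>J. b j * V j $ k))) = (\<Sum>j\<in>J. cnj (b j) * sympl h v (cconj (V j)))"
proof -
  have "sympl h v (cconj (vec (2*h+2) (\<lambda>k. \<Sum>j\<in>J. b j * V j $ k))) =
     (\<Sum>k=0..h. \<Sum>j\<in>J. cnj (b j) * (v $ k * cconj (V j) $ (h+1+k) - v $ (h+1+k) * cconj (V j) $ k))"
    unfolding sympl_def using dims
    by (intro sum.cong refl) (auto simp: cconj_idx cnj_sum sum_distrib_left sum_subtractf[symmetric] algebra_simps)
  also have "\<dots> = (\<Sum>j\<in>J. \<Sum>k=0..h. cnj (b j) * (v $ k * cconj (V j) $ (h+1+k) - v $ (h+1+k) * cconj (V j) $ k))"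
    by (rule sum.swap)
  also have "\<dots> = (\<Sum>j\<in>J. cnj (b j) * sympl h v (cconj (V j)))"
    unfolding sympl_def by (simp add: sum_distrib_left)
  finally show ?thesis .
qed

definition Vv :: "nat \<Rightarrow> (nat \<Rightarrow> nat \<Rightarrow> nat \<Rightarrow> real) \<Rightarrow> (nat \<Rightarrow> complex) \<Rightarrow> nat \<Rightarrow> complex vec" where
  "Vv h c z j = (if j = 0 then omega h c z else domega h c j z)"

definition psi :: "nat \<Rightarrow> (nat \<Rightarrow> nat \<Rightarrow> nat \<Rightarrow> real) \<Rightarrow> (nat \<Rightarrow> complex) \<Rightarrow> (nat \<Rightarrow> complex) \<Rightarrow> complex vec" where
  "psi h c z a = vec (2*h+2) (\<lambda>k. a 0 * omega h c z $ k + (\<Sum>i=1..h. a i * domega h c i z $ k))"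

lemma psi_Vv: "psi h c z a = vec (2*h+2) (\<lambda>k. \<Sum>j=0..h. a j * Vv h c z j $ k)"
  unfolding psi_def Vv_def
  by (intro eq_vecI) (auto simp: sum.atLeast_Suc_atMost intro!: sum.cong)

lemma F2_psi: "F2 h c z = range (psi h c z)"
  unfolding F2_def psi_def by auto

lemma dim_Vv: "dim_vec (Vv h c z j) = 2*h+2" by (simp add: Vv_def)

definition Yf :: "(nat \<Rightarrow> complex) \<Rightarrow> nat \<Rightarrow> real" where "Yf z = (\<lambda>p. Im (z p))"
definition pY where "pY h c z = Atri h c (Yf z) (Yf z) (Yf z)"
definition bY where "bY h c z j = Atri h c (ev j) (Yf z) (Yf z)"
definition HY where "HY h c z j l = Atri h c (ev j) (ev l) (Yf z)"
definition betaA where "betaA h c z a = (\<Sum>j=1..h. a j * complex_of_real (bY h c z j))"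
definition QA where "QA h c z a = (\<Sum>j=1..h. \<Sum>l=1..h. a j * cnj (a l) * complex_of_real (HY h c z j l))"

lemma ip_omega:
  "sympl h (psi h c z a) (cconj (omega h c z)) = a 0 * \<i> * (4/3) * complex_of_real (pY h c z) + 2 * betaA h c z a"
proof -
  have "sympl h (psi h c z a) (cconj (omega h c z)) = (\<Sum>j=0..h. a j * sympl h (Vv h c z j) (cconj (omega h c z)))"
    unfolding psi_Vv by (rule sympl_lin1) simp
  also have "\<dots> = a 0 * sympl h (omega h c z) (cconj (omega h c z)) + (\<Sum>j=1..h. a j * sympl h (domega h c j z) (cconj (omega h c z)))"
    by (simp add: sum.atLeast_Suc_atMost Vv_def)
  also have "(\<Sum>j=1..h. a j * sympl h (domega h c j z) (cconj (omega h c z))) = 2 * betaA h c z a"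
    unfolding betaA_def sum_distrib_left
    by (intro sum.cong refl) (simp add: Gj0 bY_def Yf_def)
  finally show ?thesis by (simp add: G00 pY_def Yf_def mult_ac)
qed

lemma ip_psi:
  "sympl h (psi h c z a) (cconj (psi h c z a)) = a 0 * cnj (a 0) * \<i> * (4/3) * complex_of_real (pY h c z)
     - 2 * a 0 * cnj (betaA h c z a) + 2 * cnj (a 0) * betaA h c z a + 2 * \<i> * QA h c z a"
proof -
  let ?G = "\<lambda>j l. sympl h (Vv h c z j) (cconj (Vv h c z l))"
  have "sympl h (psi h c z a) (cconj (psi h c z a)) = (\<Sum>j=0..h. a j * sympl h (Vv h c z j) (cconj (psi h c z a)))"
    unfolding psi_Vv[of h c z a] by (rule sympl_lin1) simp
  also have "\<dots> = (\<Sum>j=0..h. a j * (\<Sum>l=0..h. cnj (a l) * ?G j l))"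
    unfolding psi_Vv by (subst sympl_lin2) (auto simp: dim_Vv)
  also have "\<dots> = a 0 * (cnj (a 0) * ?G 0 0 + (\<Sum>l=1..h. cnj (a l) * ?G 0 l))
      + (\<Sum>j=1..h. a j * (cnj (a 0) * ?G j 0 + (\<Sum>l=1..h. cnj (a l) * ?G j l)))"
    by (simp add: sum.atLeast_Suc_atMost)
  also have "(\<Sum>l=1..h. cnj (a l) * ?G 0 l) = - 2 * cnj (betaA h c z a)"
    unfolding betaA_def cnj_sum sum_distrib_left
    by (intro sum.cong refl) (simp add: Vv_def G0l bY_def Yf_def)
  also have "(\<Sum>j=1..h. a j * (cnj (a 0) * ?G j 0 + (\<Sum>l=1..h. cnj (a l) * ?G j l)))
     = 2 * cnj (a 0) * betaA h c z a + 2 * \<i> * QA h c z a"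
    unfolding betaA_def QA_def sum_distrib_left distrib_left sum.distrib
    by (intro arg_cong2[where f="(+)"] sum.cong refl)
       (auto simp: Vv_def Gj0 Gjl bY_def HY_def Yf_def sum_distrib_left mult_ac)
  finally show ?thesis by (simp add: Vv_def G00 pY_def Yf_def algebra_simps)
qed


lemma psi_idx_f0: "psi h c z a $ (h+1) = a 0"
  unfolding psi_def by (simp add: omega_idx domega_idx)

lemma psi_idx_fk: "k \<in> {1..h} \<Longrightarrow> psi h c z a $ (h+1+k) = a 0 * z k + a k"
proof -
  assume k: "k \<in> {1..h}"
  have "psi h c z a $ (h+1+k) = a 0 * z k + (\<Sum>i=1..h. a i * ev i k)"
    unfolding psi_def using k by (simp add: omega_idx domega_idx)
  also have "(\<Sum>i=1..h. a i * (ev i k :: complex)) = a k"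
    unfolding ev_def using k by (simp add: if_distrib[where f="\<lambda>x. _ * x"] cong: if_cong)
  finally show ?thesis .
qed

lemma psi_zero_iff: "psi h c z a = 0\<^sub>v (2*h+2) \<longleftrightarrow> (\<forall>j\<in>{0..h}. a j = 0)"
proof
  assume z: "psi h c z a = 0\<^sub>v (2*h+2)"
  have a0: "a 0 = 0" using psi_idx_f0[of h c z a] z by simp
  have "\<And>k. k \<in> {1..h} \<Longrightarrow> a k = 0"
  proof -
    fix k assume k: "k \<in> {1..h}"
    have "psi h c z a $ (h+1+k) = 0" using z k by simp
    thus "a k = 0" using psi_idx_fk[OF k] a0 by simp
  qed
  thus "\<forall>j\<in>{0..h}. a j = 0" using a0 by (metis atLeastAtMost_iff le_0_eq not_less_eq_eq Suc_eq_plus1_left One_nat_def)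
next
  assume "\<forall>j\<in>{0..h}. a j = 0"
  hence "\<And>j. j \<le> h \<Longrightarrow> a j = 0" by auto
  thus "psi h c z a = 0\<^sub>v (2*h+2)" unfolding psi_def by (intro eq_vecI) auto
qed

lemma HR1_iff: "0 < \<i> * sympl h (omega h c z) (cconj (omega h c z)) \<longleftrightarrow> pY h c z < 0"
  by (simp add: G00 pY_def Yf_def less_complex_def)

lemma HY_sym: "HY h c z j l = HY h c z l j"
  unfolding HY_def by (rule Atri_sym12)

lemma QA_real: "cnj (QA h c z a) = QA h c z a"
proof -
  have "cnj (QA h c z a) = (\<Sum>j=1..h. \<Sum>l=1..h. cnj (a j) * a l * complex_of_real (HY h c z j l))"
    unfolding QA_def by (simp add: cnj_sum)
  also have "\<dots> = (\<Sum>l=1..h. \<Sum>j=1..h. cnj (a j) * a l * complex_of_real (HY h c z j l))"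
    by (rule sum.swap)
  also have "\<dots> = QA h c z a" unfolding QA_def
    by (intro sum.cong refl) (subst HY_sym, simp add: mult_ac)
  finally show ?thesis .
qed


lemma key_alg:
  fixes a0 b Q :: complex and p :: real
  assumes p: "p \<noteq> 0" and con: "a0 * \<i> * (4/3) * complex_of_real p + 2 * b = 0"
  shows "\<i> * (a0 * cnj a0 * \<i> * (4/3) * complex_of_real p - 2 * a0 * cnj b + 2 * cnj a0 * b + 2 * \<i> * Q)
    = 3 * b * cnj b / complex_of_real p - 2 * Q"
proof -
  have b2: "2 * b = - (a0 * \<i> * (4/3) * complex_of_real p)" using con by (simp add: add_eq_0_iff)
  have "b = (2 * b) / 2" by simp
  also have "\<dots> = - (2/3) * \<i> * complex_of_real p * a0" unfolding b2 by simp
  finally have b: "b = - (2/3) * \<i> * complex_of_real p * a0" .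
  have cb: "cnj b = (2/3) * \<i> * complex_of_real p * cnj a0" unfolding b by simp
  have "3 * b * cnj b / complex_of_real p = 3 * (- (2/3) * \<i> * complex_of_real p * a0) * ((2/3) * \<i> * complex_of_real p * cnj a0) / complex_of_real p"
    unfolding cb by (subst b) simp
  also have "\<dots> = 4/3 * complex_of_real p * a0 * cnj a0" using p
    by (simp add: field_simps)
  finally have r: "3 * b * cnj b / complex_of_real p = 4/3 * complex_of_real p * a0 * cnj a0" .
  show ?thesis unfolding r cb unfolding b
    by (simp add: algebra_simps)
qed


definition Qr where "Qr h c z x = (\<Sum>j=1..h. \<Sum>l=1..h. x j * x l * HY h c z j l)"
definition br where "br h c z x = (\<Sum>j=1..h. x j * bY h c z j)"
definition Rf where "Rf h c z x = Qr h c z x - 3/2 * (br h c z x)^2 / pY h c z"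

lemma Re_QA: "Re (QA h c z a) = Qr h c z (\<lambda>j. Re (a j)) + Qr h c z (\<lambda>j. Im (a j))"
  unfolding QA_def Qr_def by (simp add: Re_sum sum.distrib[symmetric] algebra_simps)

lemma Re_beta: "Re (betaA h c z a) = br h c z (\<lambda>j. Re (a j))"
  unfolding betaA_def br_def by (simp add: Re_sum)
lemma Im_beta: "Im (betaA h c z a) = br h c z (\<lambda>j. Im (a j))"
  unfolding betaA_def br_def by (simp add: Im_sum)

lemma cmod_beta: "(cmod (betaA h c z a))^2 = (br h c z (\<lambda>j. Re (a j)))^2 + (br h c z (\<lambda>j. Im (a j)))^2"
  by (simp add: cmod_power2 Re_beta Im_beta)

lemma Rf_cong: "(\<And>j. j \<in> {1..h} \<Longrightarrow> x j = x' j) \<Longrightarrow> Rf h c z x = Rf h c z x'"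
  unfolding Rf_def Qr_def br_def by (intro arg_cong2[where f="(-)"] arg_cong2[where f="(*)"] arg_cong2[where f="(/)"] 
    arg_cong[where f="\<lambda>t. t^2"] sum.cong refl) auto

lemma Rf_zero: "(\<And>j. j \<in> {1..h} \<Longrightarrow> x j = 0) \<Longrightarrow> Rf h c z x = 0"
  by (subst Rf_cong[of h x "\<lambda>_. 0"]) (auto simp: Rf_def Qr_def br_def)

lemma ipsi_val:
  assumes p: "pY h c z \<noteq> 0"
    and con: "sympl h (psi h c z a) (cconj (omega h c z)) = 0"
  shows "\<i> * sympl h (psi h c z a) (cconj (psi h c z a)) =
     complex_of_real (- 2 * (Rf h c z (\<lambda>j. Re (a j)) + Rf h c z (\<lambda>j. Im (a j))))"
proof -
  let ?b = "betaA h c z a" and ?Q = "QA h c z a" and ?p = "pY h c z"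
  have con': "a 0 * \<i> * (4/3) * complex_of_real ?p + 2 * ?b = 0" using con by (simp add: ip_omega)
  have e1: "\<i> * sympl h (psi h c z a) (cconj (psi h c z a)) = 3 * ?b * cnj ?b / complex_of_real ?p - 2 * ?Q"
    unfolding ip_psi by (rule key_alg[OF p con'])
  have bb: "?b * cnj ?b = complex_of_real ((cmod ?b)^2)" by (simp add: complex_norm_square del: of_real_power)
  obtain q where q: "?Q = complex_of_real q" using QA_real[of h c z a] by (metis Reals_cnj_iff Reals_cases)
  have "\<i> * sympl h (psi h c z a) (cconj (psi h c z a)) = complex_of_real (3 * (cmod ?b)^2 / ?p - 2 * Re ?Q)"
    unfolding e1 mult.assoc bb unfolding q by simp
  also have "3 * (cmod ?b)^2 / ?p - 2 * Re ?Q = - 2 * (Rf h c z (\<lambda>j. Re (a j)) + Rf h c z (\<lambda>j. Im (a j)))"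
    unfolding cmod_beta Re_QA Rf_def by (simp add: field_simps add_divide_distrib)
  finally show ?thesis .
qed

lemma betaA_cong: "(\<And>j. j \<in> {1..h} \<Longrightarrow> a j = a' j) \<Longrightarrow> betaA h c z a = betaA h c z a'"
  unfolding betaA_def by (intro sum.cong) auto

lemma HR_iff: "HR_holds h c z \<longleftrightarrow> pY h c z < 0 \<and> (\<forall>x. (\<exists>j\<in>{1..h}. x j \<noteq> 0) \<longrightarrow> Rf h c z x > 0)"
proof (cases "pY h c z < 0")
  case False
  thus ?thesis unfolding HR_holds_def HR1_iff by simp
next
  case True
  let ?p = "pY h c z"
  have p0: "?p \<noteq> 0" using True by simp
  have Rf_nonneg: "\<And>x. (\<forall>x. (\<exists>j\<in>{1..h}. x j \<noteq> 0) \<longrightarrow> Rf h c z x > 0) \<Longrightarrow> Rf h c z x \<ge> 0"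
  proof -
    fix x assume H: "\<forall>x. (\<exists>j\<in>{1..h}. x j \<noteq> 0) \<longrightarrow> Rf h c z x > 0"
    show "Rf h c z x \<ge> 0"
    proof (cases "\<exists>j\<in>{1..h}. x j \<noteq> 0")
      case True thus ?thesis using H by (simp add: less_imp_le)
    next
      case False thus ?thesis by (subst Rf_zero) auto
    qed
  qed
  have "(\<forall>\<psi>\<in>V21 h c z. \<psi> \<noteq> 0\<^sub>v (2*h+2) \<longrightarrow> \<i> * sympl h \<psi> (cconj \<psi>) < 0)
     \<longleftrightarrow> (\<forall>x. (\<exists>j\<in>{1..h}. x j \<noteq> 0) \<longrightarrow> Rf h c z x > 0)"
  proof
    assume H: "\<forall>\<psi>\<in>V21 h c z. \<psi> \<noteq> 0\<^sub>v (2*h+2) \<longrightarrow> \<i> * sympl h \<psi> (cconj \<psi>) < 0"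
    show "\<forall>x. (\<exists>j\<in>{1..h}. x j \<noteq> 0) \<longrightarrow> Rf h c z x > 0"
    proof (intro allI impI)
      fix x :: "nat \<Rightarrow> real" assume x: "\<exists>j\<in>{1..h}. x j \<noteq> 0"
      define a1 where "a1 = (\<lambda>j. complex_of_real (x j))"
      define a where "a = a1(0 := 3/2 * \<i> * betaA h c z a1 / complex_of_real ?p)"
      have ba: "betaA h c z a = betaA h c z a1" by (rule betaA_cong) (auto simp: a_def)
      have con: "sympl h (psi h c z a) (cconj (omega h c z)) = 0"
        unfolding ip_omega ba using p0 by (simp add: a_def field_simps)
      obtain j where j: "j \<in> {1..h}" "x j \<noteq> 0" using x by auto
      have "a j \<noteq> 0" using j by (auto simp: a_def a1_def)
      moreover have "j \<in> {0..h}" using j by auto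
      ultimately have nz: "psi h c z a \<noteq> 0\<^sub>v (2*h+2)" unfolding psi_zero_iff by blast
      have inV: "psi h c z a \<in> V21 h c z" unfolding V21_def F2_psi using con by auto
      have "\<i> * sympl h (psi h c z a) (cconj (psi h c z a)) < 0" using H inV nz by blast
      hence "complex_of_real (- 2 * (Rf h c z (\<lambda>j. Re (a j)) + Rf h c z (\<lambda>j. Im (a j)))) < 0"
        using ipsi_val[OF p0 con] by simp
      hence pos: "Rf h c z (\<lambda>j. Re (a j)) + Rf h c z (\<lambda>j. Im (a j)) > 0" by (simp add: less_complex_def)
      have "Rf h c z (\<lambda>j. Re (a j)) = Rf h c z x" by (rule Rf_cong) (auto simp: a_def a1_def)
      moreover have "Rf h c z (\<lambda>j. Im (a j)) = 0" by (rule Rf_zero) (auto simp: a_def a1_def)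
      ultimately show "Rf h c z x > 0" using pos by simp
    qed
  next
    assume H: "\<forall>x. (\<exists>j\<in>{1..h}. x j \<noteq> 0) \<longrightarrow> Rf h c z x > 0"
    show "\<forall>\<psi>\<in>V21 h c z. \<psi> \<noteq> 0\<^sub>v (2*h+2) \<longrightarrow> \<i> * sympl h \<psi> (cconj \<psi>) < 0"
    proof (intro ballI impI)
      fix \<psi> assume inV: "\<psi> \<in> V21 h c z" and nz: "\<psi> \<noteq> 0\<^sub>v (2*h+2)"
      then obtain a where psi: "\<psi> = psi h c z a" and con: "sympl h (psi h c z a) (cconj (omega h c z)) = 0"
        unfolding V21_def F2_psi by auto
      have "\<exists>j\<in>{1..h}. a j \<noteq> 0"
      proof (rule ccontr)
        assume "\<not> ?thesis"
        hence a0: "\<And>j. j \<in> {1..h} \<Longrightarrow> a j = 0" by auto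
        hence "betaA h c z a = 0" unfolding betaA_def by simp
        hence "a 0 = 0" using con p0 unfolding ip_omega by simp
        hence "\<forall>j\<in>{0..h}. a j = 0" using a0 by (metis atLeastAtMost_iff le_0_eq not_less_eq_eq One_nat_def)
        thus False using nz psi psi_zero_iff by blast
      qed
      then obtain j where j: "j \<in> {1..h}" "a j \<noteq> 0" by auto
      hence "Re (a j) \<noteq> 0 \<or> Im (a j) \<noteq> 0" by (simp add: complex_eq_iff)
      hence "Rf h c z (\<lambda>j. Re (a j)) > 0 \<or> Rf h c z (\<lambda>j. Im (a j)) > 0"
      proof
        assume "Re (a j) \<noteq> 0"
        hence "\<exists>k\<in>{1..h}. Re (a k) \<noteq> 0" using j by blast
        thus ?thesis using H[rule_format, of "\<lambda>j. Re (a j)"] by simp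
      next
        assume "Im (a j) \<noteq> 0"
        hence "\<exists>k\<in>{1..h}. Im (a k) \<noteq> 0" using j by blast
        thus ?thesis using H[rule_format, of "\<lambda>j. Im (a j)"] by simp
      qed
      moreover have "Rf h c z (\<lambda>j. Re (a j)) \<ge> 0" "Rf h c z (\<lambda>j. Im (a j)) \<ge> 0"
        using Rf_nonneg[OF H] by blast+
      ultimately have "Rf h c z (\<lambda>j. Re (a j)) + Rf h c z (\<lambda>j. Im (a j)) > 0" by linarith
      thus "\<i> * sympl h \<psi> (cconj \<psi>) < 0" unfolding psi ipsi_val[OF p0 con]
        by (simp add: less_complex_def)
    qed
  qed
  thus ?thesis unfolding HR_holds_def HR1_iff using True by simp
qed


lemma sum_1h: "(\<Sum>i=1..h. f i) = (\<Sum>i<h. f (Suc i))"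
proof -
  have e: "{1..h} = {Suc 0..<Suc h}" by auto
  show ?thesis unfolding e sum.shift_bounds_Suc_ivl atLeast0LessThan ..
qed

definition Bil where "Bil h c z x w = (\<Sum>i=1..h. \<Sum>j=1..h. x i * HY h c z i j * w j)"

lemma Qr_Bil: "Qr h c z x = Bil h c z x x"
  unfolding Qr_def Bil_def by (simp add: mult_ac)

lemma bY_sum: "j \<in> {1..h} \<Longrightarrow> bY h c z j = (\<Sum>l=1..h. HY h c z j l * Yf z l)"
proof -
  assume j: "j \<in> {1..h}"
  have "(\<Sum>l=1..h. HY h c z j l * Yf z l) = (\<Sum>l=1..h. Yf z l * Atri h c (ev l) (ev j) (Yf z))"
    unfolding HY_def by (intro sum.cong refl) (simp add: Atri_sym12[of h c "ev j"] mult.commute)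
  also have "\<dots> = Atri h c (Yf z) (ev j) (Yf z)" by (rule Atri_ev_sum)
  also have "\<dots> = bY h c z j" unfolding bY_def by (rule Atri_sym12)
  finally show ?thesis by simp
qed

lemma br_Bil: "br h c z x = Bil h c z x (Yf z)"
  unfolding br_def Bil_def by (intro sum.cong refl) (simp add: bY_sum sum_distrib_left mult_ac)

lemma pY_Bil: "pY h c z = Bil h c z (Yf z) (Yf z)"
proof -
  have "pY h c z = (\<Sum>k=1..h. Yf z k * Atri h c (ev k) (Yf z) (Yf z))"
    unfolding pY_def by (rule Atri_ev_sum[symmetric])
  also have "\<dots> = br h c z (Yf z)" unfolding br_def bY_def ..
  finally show ?thesis using br_Bil by simp
qed

lemma hess_carrier: "hessian h c y \<in> carrier_mat h h"
  unfolding hessian_def by simp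

lemma hess_HY: "i < h \<Longrightarrow> j < h \<Longrightarrow> hessian h c (Yf z) $$ (i,j) = HY h c z (Suc i) (Suc j)"
  by (simp add: hessian_idx HY_def Atri_sym12[of h c "ev (Suc j)"])

lemma hess_sym: "transpose_mat (hessian h c (Yf z)) = hessian h c (Yf z)"
  by (rule eq_matI) (auto simp: hess_carrier[THEN carrier_matD(1)] hess_carrier[THEN carrier_matD(2)] 
      hess_HY HY_sym[of h c z])

definition tov where "tov h x = vec h (\<lambda>i. x (Suc i))"

lemma tov_carrier: "tov h x \<in> carrier_vec h" by (simp add: tov_def)

lemma Bil_mat: "tov h x \<bullet> (hessian h c (Yf z) *\<^sub>v tov h w) = Bil h c z x w"
proof -
  have "tov h x \<bullet> (hessian h c (Yf z) *\<^sub>v tov h w) = (\<Sum>i<h. x (Suc i) * (\<Sum>j<h. HY h c z (Suc i) (Suc j) * w (Suc j)))"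
    using hess_carrier[of h c "Yf z"]
    by (simp add: tov_def scalar_prod_def atLeast0LessThan hess_HY)
  also have "\<dots> = Bil h c z x w" unfolding Bil_def sum_1h
    by (simp add: sum_distrib_left mult_ac)
  finally show ?thesis .
qed

lemma tov_zero: "tov h x = 0\<^sub>v h \<longleftrightarrow> (\<forall>j\<in>{1..h}. x j = 0)"
proof
  assume "tov h x = 0\<^sub>v h"
  hence "\<And>i. i < h \<Longrightarrow> x (Suc i) = 0" unfolding tov_def by (metis index_vec index_zero_vec(1))
  show "\<forall>j\<in>{1..h}. x j = 0"
  proof
    fix j assume j: "j \<in> {1..h}"
    hence "j = Suc (j - 1)" "j - 1 < h" by auto
    thus "x j = 0" using \<open>\<And>i. i < h \<Longrightarrow> x (Suc i) = 0\<close> by metis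
  qed
next
  assume "\<forall>j\<in>{1..h}. x j = 0"
  thus "tov h x = 0\<^sub>v h" unfolding tov_def by (intro eq_vecI) auto
qed

lemma fromv: "xv \<in> carrier_vec h \<Longrightarrow> tov h (\<lambda>j. xv $ (j - 1)) = xv"
  unfolding tov_def by (intro eq_vecI) auto

lemma main_pointwise:
  "HR_holds h c z \<longleftrightarrow> cubic_form h c (Yf z) < (0::real) \<and> has_signature (hessian h c (Yf z)) (h - 1) 1"
proof -
  have cub: "cubic_form h c (Yf z) = pY h c z / 6" unfolding pY_def by (rule cubic_Atri)
  show ?thesis
  proof (cases "pY h c z < 0")
    case False
    thus ?thesis unfolding HR_iff cub by simp
  next
    case True
    let ?M = "hessian h c (Yf z)" and ?y = "tov h (Yf z)"
    have p: "?y \<bullet> (?M *\<^sub>v ?y) < 0" unfolding Bil_mat pY_Bil[symmetric] using True .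
    have "(\<forall>x. (\<exists>j\<in>{1..h}. x j \<noteq> 0) \<longrightarrow> Rf h c z x > 0) \<longleftrightarrow>
      (\<forall>xv\<in>carrier_vec h. xv \<noteq> 0\<^sub>v h \<longrightarrow>
        xv \<bullet> (?M *\<^sub>v xv) - 3/2 * (xv \<bullet> (?M *\<^sub>v ?y))^2 / (?y \<bullet> (?M *\<^sub>v ?y)) > 0)"
    proof
      assume H: "\<forall>x. (\<exists>j\<in>{1..h}. x j \<noteq> 0) \<longrightarrow> Rf h c z x > 0"
      show "\<forall>xv\<in>carrier_vec h. xv \<noteq> 0\<^sub>v h \<longrightarrow>
        xv \<bullet> (?M *\<^sub>v xv) - 3/2 * (xv \<bullet> (?M *\<^sub>v ?y))^2 / (?y \<bullet> (?M *\<^sub>v ?y)) > 0"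
      proof (intro ballI impI)
        fix xv :: "real vec" assume xv: "xv \<in> carrier_vec h" "xv \<noteq> 0\<^sub>v h"
        define x where "x = (\<lambda>j. xv $ (j - 1))"
        have t: "tov h x = xv" unfolding x_def by (rule fromv[OF xv(1)])
        have "\<exists>j\<in>{1..h}. x j \<noteq> 0" using xv(2) tov_zero[of h x] t by auto
        hence "Rf h c z x > 0" using H by blast
        thus "xv \<bullet> (?M *\<^sub>v xv) - 3/2 * (xv \<bullet> (?M *\<^sub>v ?y))^2 / (?y \<bullet> (?M *\<^sub>v ?y)) > 0"
          unfolding t[symmetric] Bil_mat Rf_def Qr_Bil br_Bil pY_Bil .
      qed
    next
      assume H: "\<forall>xv\<in>carrier_vec h. xv \<noteq> 0\<^sub>v h \<longrightarrow>
        xv \<bullet> (?M *\<^sub>v xv) - 3/2 * (xv \<bullet> (?M *\<^sub>v ?y))^2 / (?y \<bullet> (?M *\<^sub>v ?y)) > 0"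
      show "\<forall>x. (\<exists>j\<in>{1..h}. x j \<noteq> 0) \<longrightarrow> Rf h c z x > 0"
      proof (intro allI impI)
        fix x :: "nat \<Rightarrow> real" assume x: "\<exists>j\<in>{1..h}. x j \<noteq> 0"
        have "tov h x \<noteq> 0\<^sub>v h" using x tov_zero[of h x] by auto
        hence "tov h x \<bullet> (?M *\<^sub>v tov h x) - 3/2 * (tov h x \<bullet> (?M *\<^sub>v ?y))^2 / (?y \<bullet> (?M *\<^sub>v ?y)) > 0"
          using H tov_carrier by blast
        thus "Rf h c z x > 0" unfolding Bil_mat Rf_def Qr_Bil br_Bil pY_Bil .
      qed
    qed
    also have "\<dots> \<longleftrightarrow> has_signature ?M (h - 1) 1"
      by (rule matrix_equiv[OF hess_carrier hess_sym tov_carrier p])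
    finally show ?thesis unfolding HR_iff cub using True by simp
  qed
qed

theorem mainTheorem14:
  fixes h :: nat and c :: "nat \<Rightarrow> nat \<Rightarrow> nat \<Rightarrow> real"
  shows "{z :: nat \<Rightarrow> complex. HR_holds h c z} =
         {z. cubic_form h c (\<lambda>i. Im (z i)) < (0::real) \<and>
             has_signature (hessian h c (\<lambda>i. Im (z i))) (h - 1) 1}"
  using main_pointwise[of h c] unfolding Yf_def by auto


end
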